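(* With notation as in the context, for each $s\in\{3,4,5,6,7\}$ there is a unique function $h_s:\Delta_s^+\to\{1,\dots,s\}$ such that $h_s(\alpha_s)=s$ and the map $\beta\mapsto v_{h_s(\beta)}$ is an open map of graphs from $\mathsf{H}_s$ to $\mathsf{Dyn}(E_s)$. For $s=8$ there is no function $h:\Delta_8^+\to\{1,\dots,8\}$ with $h(\alpha_8)=8$ such that $\beta\mapsto v_{h(\beta)}$ is an open map from $\mathsf{H}_8$ to $\mathsf{Dyn}(E_8)$.
   Context: Let $\Delta(E_8)$ be the root system of type $E_8$ with simple roots $\alpha_1,\dots,\alpha_8$, where $\langle\alpha_i,\alpha_i\rangle=2$, $\langle\alpha_i,\alpha_j\rangle=-1$ if $\{i,j\}\in\{\{1,3\},\{3,4\},\{4,5\},\{5,6\},\{6,7\},\{7,8\},\{2,4\}\}$, and $0$ otherwise; $\Delta^+$ denotes its positive roots and $\beta=\sum\beta^i\alpha_i$. For $\beta\in\Delta^+$ let $m(\beta)=\max\{i:\beta^i\ne0\}$, and define the strata $\Delta_1^+=\{\alpha_1\}$, $\Delta_3^+=\{\beta\in\Delta^+: m(\beta)\in\{2,3\}\}$, $\Delta_s^+=\{\beta\in\Delta^+: m(\beta)=s\}$ for $4\le s\le 8$. For $3\le s\le8$, $\mathsf{Dyn}(E_s)$ is the graph with vertices $v_1,\dots,v_s$, with $v_i,v_j$ adjacent iff $\langle\alpha_i,\alpha_j\rangle=-1$. $\mathsf{H}_s$ is the graph with vertex set $\Delta_s^+$, where $\beta,\beta'$ are adjacent iff $\beta-\beta'$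 or $\beta'-\beta$ is one of the simple roots $\alpha_1,\dots,\alpha_8$. An open map from a graph $P$ to a graph $R$ is a function $h$ from vertices of $P$ to vertices of $R$ which is a graph homomorphism (adjacent vertices go to adjacent vertices) and is locally surjective (for each vertex $u$ of $P$, $h$ maps the set of neighbours of $u$ onto the set of neighbours of $h(u)$). *)

theory Defs
  imports Main "HOL-Library.FuncSet"
begin

text \<open>Vectors in the root lattice are coefficient functions \<open>nat \<Rightarrow> int\<close>,
  indexed by 1..8 (coefficients outside 1..8 are zero for all roots).\<close>

definition e8_adj :: "nat \<Rightarrow> nat \<Rightarrow> bool" where
  "e8_adj i j \<longleftrightarrow> {i, j} \<in> {{1,3},{3,4},{4,5},{5,6},{6,7},{7,8},{2,4}}"

definition cartan :: "nat \<Rightarrow> nat \<Rightarrow> int" where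
  "cartan i j = (if i = j then 2 else if e8_adj i j then -1 else 0)"

definition simple_root :: "nat \<Rightarrow> (nat \<Rightarrow> int)" where
  "simple_root i = (\<lambda>j. if j = i then 1 else 0)"

definition form :: "(nat \<Rightarrow> int) \<Rightarrow> (nat \<Rightarrow> int) \<Rightarrow> int" where
  "form \<beta> \<gamma> = (\<Sum>i\<in>{1..8}. \<Sum>j\<in>{1..8}. \<beta> i * \<gamma> j * cartan i j)"

definition reflect :: "nat \<Rightarrow> (nat \<Rightarrow> int) \<Rightarrow> (nat \<Rightarrow> int)" where
  "reflect i \<beta> = (\<lambda>j. \<beta> j - form \<beta> (simple_root i) * simple_root i j)"

inductive_set roots :: "(nat \<Rightarrow> int) set" where
  simple: "i \<in> {1..8} \<Longrightarrow> simple_root i \<in> roots"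
| refl: "\<beta> \<in> roots \<Longrightarrow> i \<in> {1..8} \<Longrightarrow> reflect i \<beta> \<in> roots"

definition pos_roots :: "(nat \<Rightarrow> int) set" where
  "pos_roots = {\<beta> \<in> roots. \<forall>j. \<beta> j \<ge> 0}"

definition mx :: "(nat \<Rightarrow> int) \<Rightarrow> nat" where
  "mx \<beta> = Max {i \<in> {1..8}. \<beta> i \<noteq> 0}"

definition stratum :: "nat \<Rightarrow> (nat \<Rightarrow> int) set" where
  "stratum s = (if s = 1 then {simple_root 1}
               else if s = 3 then {\<beta> \<in> pos_roots. mx \<beta> \<in> {2, 3}}
               else {\<beta> \<in> pos_roots. mx \<beta> = s})"

text \<open>Graph Dyn(E_s): vertices 1..s (vertex i standing for v_i).\<close>
definition dyn_V :: "nat \<Rightarrow> nat set" where "dyn_V s = {1..s}"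
definition dyn_E :: "nat \<Rightarrow> nat \<Rightarrow> bool" where "dyn_E i j \<longleftrightarrow> e8_adj i j"

definition H_E :: "(nat \<Rightarrow> int) \<Rightarrow> (nat \<Rightarrow> int) \<Rightarrow> bool" where
  "H_E \<beta> \<beta>' \<longleftrightarrow> (\<exists>k\<in>{1..8}. (\<lambda>j. \<beta> j - \<beta>' j) = simple_root k
                               \<or> (\<lambda>j. \<beta>' j - \<beta> j) = simple_root k)"

definition nbhd :: "'a set \<Rightarrow> ('a \<Rightarrow> 'a \<Rightarrow> bool) \<Rightarrow> 'a \<Rightarrow> 'a set" where
  "nbhd V E u = {v \<in> V. E u v}"

definition open_map :: "'a set \<Rightarrow> ('a \<Rightarrow> 'a \<Rightarrow> bool) \<Rightarrow> 'b set \<Rightarrow> ('b \<Rightarrow> 'b \<Rightarrow> bool)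
    \<Rightarrow> ('a \<Rightarrow> 'b) \<Rightarrow> bool" where
  "open_map VP EP VR ER h \<longleftrightarrow>
     (\<forall>u\<in>VP. h u \<in> VR) \<and>
     (\<forall>u\<in>VP. \<forall>v\<in>VP. EP u v \<longrightarrow> ER (h u) (h v)) \<and>
     (\<forall>u\<in>VP. h ` nbhd VP EP u = nbhd VR ER (h u))"

definition good_h :: "nat \<Rightarrow> ((nat \<Rightarrow> int) \<Rightarrow> nat) \<Rightarrow> bool" where
  "good_h s h \<longleftrightarrow> h \<in> stratum s \<rightarrow> {1..s} \<and> h (simple_root s) = s \<and>
      open_map (stratum s) H_E (dyn_V s) dyn_E h"

end

theory Submission imports Defs begin

definition vec :: "int list \<Rightarrow> nat \<Rightarrow> int" where
  "vec xs j = (if 1 \<le> j \<and> j \<le> 8 then xs ! (j - 1) else 0)"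

definition eL :: "nat \<Rightarrow> int list" where
  "eL i = [if i = 1 then 1 else 0, if i = 2 then 1 else 0, if i = 3 then 1 else 0, if i = 4 then 1 else 0,
           if i = 5 then 1 else 0, if i = 6 then 1 else 0, if i = 7 then 1 else 0, if i = 8 then 1 else 0]"

definition adjL :: "nat \<Rightarrow> nat \<Rightarrow> bool" where
  "adjL i j = ((i = 1 \<and> j = 3) \<or> (i = 3 \<and> j = 1) \<or> (i = 3 \<and> j = 4) \<or> (i = 4 \<and> j = 3) \<or>
     (i = 4 \<and> j = 5) \<or> (i = 5 \<and> j = 4) \<or> (i = 5 \<and> j = 6) \<or> (i = 6 \<and> j = 5) \<or>
     (i = 6 \<and> j = 7) \<or> (i = 7 \<and> j = 6) \<or> (i = 7 \<and> j = 8) \<or> (i = 8 \<and> j = 7) \<or>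
     (i = 2 \<and> j = 4) \<or> (i = 4 \<and> j = 2))"

lemma e8_adj_iff: "e8_adj i j = adjL i j"
  unfolding e8_adj_def adjL_def by (auto simp: doubleton_eq_iff)

fun rf :: "nat \<Rightarrow> int list \<Rightarrow> int list" where
 "rf i [a,b,c,d,e,f,g,h] = (if i = 1 then [c-a,b,c,d,e,f,g,h] else if i = 2 then [a,d-b,c,d,e,f,g,h]
   else if i = 3 then [a,b,a+d-c,d,e,f,g,h] else if i = 4 then [a,b,c,b+c+e-d,e,f,g,h]
   else if i = 5 then [a,b,c,d,d+f-e,f,g,h] else if i = 6 then [a,b,c,d,e,e+g-f,g,h]
   else if i = 7 then [a,b,c,d,e,f,f+h-g,h] else [a,b,c,d,e,f,g,g-h])"
| "rf i x = x"

fun subL :: "int list \<Rightarrow> int list \<Rightarrow> int list" where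
  "subL (a#x) (b#y) = (a - b) # subL x y"
| "subL _ _ = []"

lemma len8: "length x = 8 \<Longrightarrow> \<exists>a b c d e f g h. x = [a,b,c,d,e,f,g,h]"
  by (auto simp: length_Suc_conv eval_nat_numeral)

lemma vec_eq: "length x = 8 \<Longrightarrow> length y = 8 \<Longrightarrow> vec x = vec y \<longleftrightarrow> x = y"
proof
  assume l: "length x = 8" "length y = 8" and v: "vec x = vec y"
  show "x = y"
  proof (rule nth_equalityI)
    show "length x = length y" using l by simp
    fix j assume "j < length x"
    then have "vec x (j+1) = x ! j" "vec y (j+1) = y ! j" using l by (auto simp: vec_def)
    then show "x ! j = y ! j" using v by simp
  qed
qed simp

lemma vec8: "vec [a,b,c,d,e,f,g,h] = (\<lambda>j. if j = 1 then a else if j = 2 then b else if j = 3 then c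
   else if j = 4 then d else if j = 5 then e else if j = 6 then f else if j = 7 then g else if j = 8 then h else 0)"
  by (auto simp: vec_def fun_eq_iff numeral_eq_Suc nth_Cons')

lemma i8: "i \<in> {1..8::nat} \<longleftrightarrow> i = 1 \<or> i = 2 \<or> i = 3 \<or> i = 4 \<or> i = 5 \<or> i = 6 \<or> i = 7 \<or> i = 8"
  by auto

lemma simple_vec: "i \<in> {1..8} \<Longrightarrow> simple_root i = vec (eL i)"
  unfolding i8 by (auto simp: simple_root_def eL_def vec8 fun_eq_iff)

lemma set18: "{1..8::nat} = {1,2,3,4,5,6,7,8}" by auto

lemma form_simple: "i \<in> {1..8} \<Longrightarrow> form \<beta> (simple_root i) = (\<Sum>a\<in>{1..8}. \<beta> a * cartan a i)"
proof -
  assume i: "i \<in> {1..8}"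
  have "(\<Sum>j\<in>{1..8}. \<beta> a * (if j = i then 1 else 0) * cartan a j) = \<beta> a * cartan a i" for a
  proof -
    have "(\<Sum>j\<in>{1..8}. \<beta> a * (if j = i then 1 else 0) * cartan a j) = (\<Sum>j\<in>{1..8}. if j = i then \<beta> a * cartan a i else 0)"
      by (rule sum.cong) auto
    also have "\<dots> = \<beta> a * cartan a i" using i by (simp add: sum.delta)
    finally show ?thesis .
  qed
  then show ?thesis unfolding form_def simple_root_def by simp
qed

lemma reflect_vec: assumes "length x = 8" "i \<in> {1..8}" shows "reflect i (vec x) = vec (rf i x)"
proof -
  obtain a b c d e f g h where x: "x = [a,b,c,d,e,f,g,h]" using len8[OF assms(1)] by blast
  from assms(2) have "i = 1 \<or> i = 2 \<or> i = 3 \<or> i = 4 \<or> i = 5 \<or> i = 6 \<or> i = 7 \<or> i = 8" by auto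
  then show ?thesis unfolding reflect_def form_simple[OF assms(2)] x set18
    by (elim disjE) (simp_all add: vec8 cartan_def e8_adj_iff adjL_def simple_root_def fun_eq_iff)
qed


fun addL :: "int list \<Rightarrow> int list \<Rightarrow> int list" where
  "addL (a#x) (b#y) = (a + b) # addL x y"
| "addL _ _ = []"

lemma len_subL[simp]: "length (subL x y) = min (length x) (length y)"
  by (induction x y rule: subL.induct) auto

lemma len_addL[simp]: "length (addL x y) = min (length x) (length y)"
  by (induction x y rule: addL.induct) auto

lemma subL_eq: "length x = length y \<Longrightarrow> length e = length x \<Longrightarrow> subL x y = e \<longleftrightarrow> y = subL x e"
proof (induction x arbitrary: y e)
  case Nil then show ?case by simp
next
  case (Cons a x)
  then obtain b y' c e' where ye: "y = b # y'" "e = c # e'" by (cases y; cases e) auto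
  have "length x = length y'" "length e' = length x" using Cons.prems ye by auto
  note ih = Cons.IH[OF this]
  show ?case unfolding ye using ih by auto
qed

lemma subL_eq2: "length x = length y \<Longrightarrow> length e = length x \<Longrightarrow> subL y x = e \<longleftrightarrow> y = addL x e"
proof (induction x arbitrary: y e)
  case Nil then show ?case by simp
next
  case (Cons a x)
  then obtain b y' c e' where ye: "y = b # y'" "e = c # e'" by (cases y; cases e) auto
  have "length x = length y'" "length e' = length x" using Cons.prems ye by auto
  note ih = Cons.IH[OF this]
  show ?case unfolding ye using ih by auto
qed

lemma vec_sub: "length x = 8 \<Longrightarrow> length y = 8 \<Longrightarrow> (\<lambda>j. vec x j - vec y j) = vec (subL x y)"
  apply (drule len8)+ by (auto simp: vec8 fun_eq_iff)

lemma len_eL[simp]: "length (eL i) = 8" by (simp add: eL_def)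

definition cands :: "int list \<Rightarrow> int list list" where
  "cands x = map (\<lambda>k. subL x (eL k)) [1,2,3,4,5,6,7,8] @ map (\<lambda>k. addL x (eL k)) [1,2,3,4,5,6,7,8]"

lemma H_E_vec: assumes "length x = 8" "length y = 8"
  shows "H_E (vec x) (vec y) \<longleftrightarrow> y \<in> set (cands x)"
proof -
  have "H_E (vec x) (vec y) \<longleftrightarrow> (\<exists>k\<in>{1..8}. subL x y = eL k \<or> subL y x = eL k)"
    unfolding H_E_def vec_sub[OF assms] vec_sub[OF assms(2,1)]
    using simple_vec vec_eq assms by (auto simp: min_def)
  also have "\<dots> \<longleftrightarrow> (\<exists>k\<in>{1..8}. y = subL x (eL k) \<or> y = addL x (eL k))"
    using subL_eq subL_eq2 assms by simp
  also have "\<dots> \<longleftrightarrow> y \<in> set (cands x)"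
    unfolding cands_def set18 by auto
  finally show ?thesis .
qed

datatype trie = Lf | Nd "(int \<times> trie) list"

fun memT :: "int list \<Rightarrow> trie \<Rightarrow> bool" where
  "memT [] Lf = True"
| "memT (a#xs) (Nd l) = (case map_of l a of None \<Rightarrow> False | Some t \<Rightarrow> memT xs t)"
| "memT _ _ = False"

fun flatT :: "trie \<Rightarrow> int list list" where
  "flatT Lf = [[]]"
| "flatT (Nd l) = concat (map (\<lambda>(a,t). map ((#) a) (flatT t)) l)"

lemma memT_sound: "memT x t \<Longrightarrow> x \<in> set (flatT t)"
proof (induction x arbitrary: t)
  case Nil
  then show ?case by (cases t) auto
next
  case (Cons a xs)
  then obtain l where t: "t = Nd l" by (cases t) auto
  with Cons obtain t' where m: "map_of l a = Some t'" "memT xs t'" by (auto split: option.splits)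
  then have "(a, t') \<in> set l" by (simp add: map_of_SomeD)
  with Cons.IH[OF m(2)] show ?case unfolding t by force
qed

fun mxL :: "int list \<Rightarrow> nat" where
  "mxL [a,b,c,d,e,f,g,h] = (if h \<noteq> 0 then 8 else if g \<noteq> 0 then 7 else if f \<noteq> 0 then 6 else if e \<noteq> 0 then 5
     else if d \<noteq> 0 then 4 else if c \<noteq> 0 then 3 else if b \<noteq> 0 then 2 else if a \<noteq> 0 then 1 else 0)"
| "mxL x = 0"

lemma mx_char: assumes "\<beta> m \<noteq> 0" "m \<in> {1..8}" "\<forall>j. m < j \<and> j \<le> 8 \<longrightarrow> \<beta> j = 0"
  shows "mx \<beta> = m"
  unfolding mx_def
proof (rule Max_eqI)
  show "finite {i \<in> {1..8}. \<beta> i \<noteq> 0}" by simp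
  show "m \<in> {i \<in> {1..8}. \<beta> i \<noteq> 0}" using assms by simp
  fix y assume "y \<in> {i \<in> {1..8}. \<beta> i \<noteq> 0}"
  then have y: "y \<le> 8" "\<beta> y \<noteq> 0" by auto
  show "y \<le> m"
  proof (rule ccontr)
    assume "\<not> y \<le> m"
    then have "m < y" by simp
    with y assms(3) show False by blast
  qed
qed

lemma mx_vec: assumes "length x = 8" "mxL x \<noteq> 0" shows "mx (vec x) = mxL x"
proof -
  obtain a b c d e f g h where x: "x = [a,b,c,d,e,f,g,h]" using len8[OF assms(1)] by blast
  have 1: "vec x (mxL x) \<noteq> 0" using assms(2) unfolding x by (auto simp: vec8 split: if_splits)
  have 2: "mxL x \<in> {1..8}" using assms(2) unfolding x by (auto split: if_splits)
  have "\<forall>j\<in>{1,2,3,4,5,6,7,8}. mxL x < j \<longrightarrow> vec x j = 0" unfolding x by (simp add: vec8)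
  then have 3: "\<forall>j. mxL x < j \<and> j \<le> 8 \<longrightarrow> vec x j = 0" unfolding set18[symmetric] by (auto simp: vec_def)
  show ?thesis by (rule mx_char[OF 1 2 3])
qed

definition RP :: "int list list" where "RP = [[2,3,4,6,5,4,3,2],[2,3,4,6,5,4,3,1],[2,3,4,6,5,4,2,1],[2,3,4,6,5,3,2,1],[2,3,4,6,4,3,2,1],[2,3,4,5,4,3,2,1],[2,3,3,5,4,3,2,1],[2,2,4,5,4,3,2,1],[2,2,3,5,4,3,2,1],[2,2,3,4,4,3,2,1],[2,2,3,4,3,3,2,1],[2,2,3,4,3,2,2,1],[2,2,3,4,3,2,1,1],[2,2,3,4,3,2,1,0],[1,3,3,5,4,3,2,1],[1,2,3,5,4,3,2,1],[1,2,3,4,4,3,2,1],[1,2,3,4,3,3,2,1],[1,2,3,4,3,2,2,1],[1,2,3,4,3,2,1,1],[1,2,3,4,3,2,1,0],[1,2,2,4,4,3,2,1],[1,2,2,4,3,3,2,1],[1,2,2,4,3,2,2,1],[1,2,2,4,3,2,1,1],[1,2,2,4,3,2,1,0],[1,2,2,3,3,3,2,1],[1,2,2,3,3,2,2,1],[1,2,2,3,3,2,1,1],[1,2,2,3,3,2,1,0],[1,2,2,3,2,2,2,1],[1,2,2,3,2,2,1,1],[1,2,2,3,2,2,1,0],[1,2,2,3,2,1,1,1],[1,2,2,3,2,1,1,0],[1,2,2,3,2,1,0,0],[1,1,2,3,3,3,2,1],[1,1,2,3,3,2,2,1],[1,1,2,3,3,2,1,1],[1,1,2,3,3,2,1,0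],[1,1,2,3,2,2,2,1],[1,1,2,3,2,2,1,1],[1,1,2,3,2,2,1,0],[1,1,2,3,2,1,1,1],[1,1,2,3,2,1,1,0],[1,1,2,3,2,1,0,0],[1,1,2,2,2,2,2,1],[1,1,2,2,2,2,1,1],[1,1,2,2,2,2,1,0],[1,1,2,2,2,1,1,1],[1,1,2,2,2,1,1,0],[1,1,2,2,2,1,0,0],[1,1,2,2,1,1,1,1],[1,1,2,2,1,1,1,0],[1,1,2,2,1,1,0,0],[1,1,2,2,1,0,0,0],[1,1,1,2,2,2,2,1],[1,1,1,2,2,2,1,1],[1,1,1,2,2,2,1,0],[1,1,1,2,2,1,1,1],[1,1,1,2,2,1,1,0],[1,1,1,2,2,1,0,0],[1,1,1,2,1,1,1,1],[1,1,1,2,1,1,1,0],[1,1,1,2,1,1,0,0],[1,1,1,2,1,0,0,0],[1,1,1,1,1,1,1,1],[1,1,1,1,1,1,1,0],[1,1,1,1,1,1,0,0],[1,1,1,1,1,0,0,0],[1,1,1,1,0,0,0,0],[1,0,1,1,1,1,1,1],[1,0,1,1,1,1,1,0],[1,0,1,1,1,1,0,0],[1,0,1,1,1,0,0,0],[1,0,1,1,0,0,0,0],[1,0,1,0,0,0,0,0],[1,0,0,0,0,0,0,0],[0,1,1,2,2,2,2,1],[0,1,1,2,2,2,1,1],[0,1,1,2,2,2,1,0],[0,1,1,2,2,1,1,1],[0,1,1,2,2,1,1,0],[0,1,1,2,2,1,0,0],[0,1,1,2,1,1,1,1],[0,1,1,2,1,1,1,0],[0,1,1,2,1,1,0,0]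,[0,1,1,2,1,0,0,0],[0,1,1,1,1,1,1,1],[0,1,1,1,1,1,1,0],[0,1,1,1,1,1,0,0],[0,1,1,1,1,0,0,0],[0,1,1,1,0,0,0,0],[0,1,0,1,1,1,1,1],[0,1,0,1,1,1,1,0],[0,1,0,1,1,1,0,0],[0,1,0,1,1,0,0,0],[0,1,0,1,0,0,0,0],[0,1,0,0,0,0,0,0],[0,0,1,1,1,1,1,1],[0,0,1,1,1,1,1,0],[0,0,1,1,1,1,0,0],[0,0,1,1,1,0,0,0],[0,0,1,1,0,0,0,0],[0,0,1,0,0,0,0,0],[0,0,0,1,1,1,1,1],[0,0,0,1,1,1,1,0],[0,0,0,1,1,1,0,0],[0,0,0,1,1,0,0,0],[0,0,0,1,0,0,0,0],[0,0,0,0,1,1,1,1],[0,0,0,0,1,1,1,0],[0,0,0,0,1,1,0,0],[0,0,0,0,1,0,0,0],[0,0,0,0,0,1,1,1],[0,0,0,0,0,1,1,0],[0,0,0,0,0,1,0,0],[0,0,0,0,0,0,1,1],[0,0,0,0,0,0,1,0],[0,0,0,0,0,0,0,1]]"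
definition nP0 :: trie where "nP0 = Nd [(2,Lf),(1,Lf)]"
definition nP1 :: trie where "nP1 = Nd [(1,Lf)]"
definition nP2 :: trie where "nP2 = Nd [(3,nP0),(2,nP1)]"
definition nP3 :: trie where "nP3 = Nd [(1,Lf)]"
definition nP4 :: trie where "nP4 = Nd [(2,nP3)]"
definition nP5 :: trie where "nP5 = Nd [(4,nP2),(3,nP4)]"
definition nP6 :: trie where "nP6 = Nd [(1,Lf)]"
definition nP7 :: trie where "nP7 = Nd [(2,nP6)]"
definition nP8 :: trie where "nP8 = Nd [(3,nP7)]"
definition nP9 :: trie where "nP9 = Nd [(5,nP5),(4,nP8)]"
definition nP10 :: trie where "nP10 = Nd [(1,Lf)]"
definition nP11 :: trie where "nP11 = Nd [(2,nP10)]"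
definition nP12 :: trie where "nP12 = Nd [(3,nP11)]"
definition nP13 :: trie where "nP13 = Nd [(4,nP12)]"
definition nP14 :: trie where "nP14 = Nd [(6,nP9),(5,nP13)]"
definition nP15 :: trie where "nP15 = Nd [(1,Lf)]"
definition nP16 :: trie where "nP16 = Nd [(2,nP15)]"
definition nP17 :: trie where "nP17 = Nd [(3,nP16)]"
definition nP18 :: trie where "nP18 = Nd [(4,nP17)]"
definition nP19 :: trie where "nP19 = Nd [(5,nP18)]"
definition nP20 :: trie where "nP20 = Nd [(4,nP14),(3,nP19)]"
definition nP21 :: trie where "nP21 = Nd [(1,Lf)]"
definition nP22 :: trie where "nP22 = Nd [(2,nP21)]"
definition nP23 :: trie where "nP23 = Nd [(3,nP22)]"
definition nP24 :: trie where "nP24 = Nd [(4,nP23)]"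
definition nP25 :: trie where "nP25 = Nd [(5,nP24)]"
definition nP26 :: trie where "nP26 = Nd [(1,Lf)]"
definition nP27 :: trie where "nP27 = Nd [(2,nP26)]"
definition nP28 :: trie where "nP28 = Nd [(3,nP27)]"
definition nP29 :: trie where "nP29 = Nd [(4,nP28)]"
definition nP30 :: trie where "nP30 = Nd [(1,Lf)]"
definition nP31 :: trie where "nP31 = Nd [(2,nP30)]"
definition nP32 :: trie where "nP32 = Nd [(3,nP31)]"
definition nP33 :: trie where "nP33 = Nd [(1,Lf)]"
definition nP34 :: trie where "nP34 = Nd [(2,nP33)]"
definition nP35 :: trie where "nP35 = Nd [(1,Lf)]"
definition nP36 :: trie where "nP36 = Nd [(1,Lf),(0,Lf)]"
definition nP37 :: trie where "nP37 = Nd [(2,nP35),(1,nP36)]"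
definition nP38 :: trie where "nP38 = Nd [(3,nP34),(2,nP37)]"
definition nP39 :: trie where "nP39 = Nd [(4,nP32),(3,nP38)]"
definition nP40 :: trie where "nP40 = Nd [(5,nP29),(4,nP39)]"
definition nP41 :: trie where "nP41 = Nd [(4,nP25),(3,nP40)]"
definition nP42 :: trie where "nP42 = Nd [(3,nP20),(2,nP41)]"
definition nP43 :: trie where "nP43 = Nd [(1,Lf)]"
definition nP44 :: trie where "nP44 = Nd [(2,nP43)]"
definition nP45 :: trie where "nP45 = Nd [(3,nP44)]"
definition nP46 :: trie where "nP46 = Nd [(4,nP45)]"
definition nP47 :: trie where "nP47 = Nd [(5,nP46)]"
definition nP48 :: trie where "nP48 = Nd [(3,nP47)]"
definition nP49 :: trie where "nP49 = Nd [(1,Lf)]"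
definition nP50 :: trie where "nP50 = Nd [(2,nP49)]"
definition nP51 :: trie where "nP51 = Nd [(3,nP50)]"
definition nP52 :: trie where "nP52 = Nd [(4,nP51)]"
definition nP53 :: trie where "nP53 = Nd [(1,Lf)]"
definition nP54 :: trie where "nP54 = Nd [(2,nP53)]"
definition nP55 :: trie where "nP55 = Nd [(3,nP54)]"
definition nP56 :: trie where "nP56 = Nd [(1,Lf)]"
definition nP57 :: trie where "nP57 = Nd [(2,nP56)]"
definition nP58 :: trie where "nP58 = Nd [(1,Lf)]"
definition nP59 :: trie where "nP59 = Nd [(1,Lf),(0,Lf)]"
definition nP60 :: trie where "nP60 = Nd [(2,nP58),(1,nP59)]"
definition nP61 :: trie where "nP61 = Nd [(3,nP57),(2,nP60)]"
definition nP62 :: trie where "nP62 = Nd [(4,nP55),(3,nP61)]"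
definition nP63 :: trie where "nP63 = Nd [(5,nP52),(4,nP62)]"
definition nP64 :: trie where "nP64 = Nd [(1,Lf)]"
definition nP65 :: trie where "nP65 = Nd [(2,nP64)]"
definition nP66 :: trie where "nP66 = Nd [(3,nP65)]"
definition nP67 :: trie where "nP67 = Nd [(1,Lf)]"
definition nP68 :: trie where "nP68 = Nd [(2,nP67)]"
definition nP69 :: trie where "nP69 = Nd [(1,Lf)]"
definition nP70 :: trie where "nP70 = Nd [(1,Lf),(0,Lf)]"
definition nP71 :: trie where "nP71 = Nd [(2,nP69),(1,nP70)]"
definition nP72 :: trie where "nP72 = Nd [(3,nP68),(2,nP71)]"
definition nP73 :: trie where "nP73 = Nd [(4,nP66),(3,nP72)]"
definition nP74 :: trie where "nP74 = Nd [(1,Lf)]"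
definition nP75 :: trie where "nP75 = Nd [(2,nP74)]"
definition nP76 :: trie where "nP76 = Nd [(1,Lf)]"
definition nP77 :: trie where "nP77 = Nd [(1,Lf),(0,Lf)]"
definition nP78 :: trie where "nP78 = Nd [(2,nP76),(1,nP77)]"
definition nP79 :: trie where "nP79 = Nd [(3,nP75),(2,nP78)]"
definition nP80 :: trie where "nP80 = Nd [(1,Lf)]"
definition nP81 :: trie where "nP81 = Nd [(1,Lf),(0,Lf)]"
definition nP82 :: trie where "nP82 = Nd [(2,nP80),(1,nP81)]"
definition nP83 :: trie where "nP83 = Nd [(1,Lf),(0,Lf)]"
definition nP84 :: trie where "nP84 = Nd [(0,Lf)]"
definition nP85 :: trie where "nP85 = Nd [(1,nP83),(0,nP84)]"
definition nP86 :: trie where "nP86 = Nd [(2,nP82),(1,nP85)]"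
definition nP87 :: trie where "nP87 = Nd [(3,nP79),(2,nP86)]"
definition nP88 :: trie where "nP88 = Nd [(4,nP73),(3,nP87)]"
definition nP89 :: trie where "nP89 = Nd [(3,nP63),(2,nP88)]"
definition nP90 :: trie where "nP90 = Nd [(1,Lf)]"
definition nP91 :: trie where "nP91 = Nd [(2,nP90)]"
definition nP92 :: trie where "nP92 = Nd [(1,Lf)]"
definition nP93 :: trie where "nP93 = Nd [(1,Lf),(0,Lf)]"
definition nP94 :: trie where "nP94 = Nd [(2,nP92),(1,nP93)]"
definition nP95 :: trie where "nP95 = Nd [(3,nP91),(2,nP94)]"
definition nP96 :: trie where "nP96 = Nd [(1,Lf)]"
definition nP97 :: trie where "nP97 = Nd [(1,Lf),(0,Lf)]"
definition nP98 :: trie where "nP98 = Nd [(2,nP96),(1,nP97)]"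
definition nP99 :: trie where "nP99 = Nd [(1,Lf),(0,Lf)]"
definition nP100 :: trie where "nP100 = Nd [(0,Lf)]"
definition nP101 :: trie where "nP101 = Nd [(1,nP99),(0,nP100)]"
definition nP102 :: trie where "nP102 = Nd [(2,nP98),(1,nP101)]"
definition nP103 :: trie where "nP103 = Nd [(3,nP95),(2,nP102)]"
definition nP104 :: trie where "nP104 = Nd [(1,Lf)]"
definition nP105 :: trie where "nP105 = Nd [(1,Lf),(0,Lf)]"
definition nP106 :: trie where "nP106 = Nd [(2,nP104),(1,nP105)]"
definition nP107 :: trie where "nP107 = Nd [(1,Lf),(0,Lf)]"
definition nP108 :: trie where "nP108 = Nd [(0,Lf)]"
definition nP109 :: trie where "nP109 = Nd [(1,nP107),(0,nP108)]"
definition nP110 :: trie where "nP110 = Nd [(2,nP106),(1,nP109)]"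
definition nP111 :: trie where "nP111 = Nd [(1,Lf),(0,Lf)]"
definition nP112 :: trie where "nP112 = Nd [(0,Lf)]"
definition nP113 :: trie where "nP113 = Nd [(1,nP111),(0,nP112)]"
definition nP114 :: trie where "nP114 = Nd [(0,Lf)]"
definition nP115 :: trie where "nP115 = Nd [(0,nP114)]"
definition nP116 :: trie where "nP116 = Nd [(1,nP113),(0,nP115)]"
definition nP117 :: trie where "nP117 = Nd [(2,nP110),(1,nP116)]"
definition nP118 :: trie where "nP118 = Nd [(3,nP103),(2,nP117)]"
definition nP119 :: trie where "nP119 = Nd [(1,Lf)]"
definition nP120 :: trie where "nP120 = Nd [(1,Lf),(0,Lf)]"
definition nP121 :: trie where "nP121 = Nd [(2,nP119),(1,nP120)]"
definition nP122 :: trie where "nP122 = Nd [(1,Lf),(0,Lf)]"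
definition nP123 :: trie where "nP123 = Nd [(0,Lf)]"
definition nP124 :: trie where "nP124 = Nd [(1,nP122),(0,nP123)]"
definition nP125 :: trie where "nP125 = Nd [(2,nP121),(1,nP124)]"
definition nP126 :: trie where "nP126 = Nd [(1,Lf),(0,Lf)]"
definition nP127 :: trie where "nP127 = Nd [(0,Lf)]"
definition nP128 :: trie where "nP128 = Nd [(1,nP126),(0,nP127)]"
definition nP129 :: trie where "nP129 = Nd [(0,Lf)]"
definition nP130 :: trie where "nP130 = Nd [(0,nP129)]"
definition nP131 :: trie where "nP131 = Nd [(1,nP128),(0,nP130)]"
definition nP132 :: trie where "nP132 = Nd [(2,nP125),(1,nP131)]"
definition nP133 :: trie where "nP133 = Nd [(1,Lf),(0,Lf)]"
definition nP134 :: trie where "nP134 = Nd [(0,Lf)]"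
definition nP135 :: trie where "nP135 = Nd [(1,nP133),(0,nP134)]"
definition nP136 :: trie where "nP136 = Nd [(0,Lf)]"
definition nP137 :: trie where "nP137 = Nd [(0,nP136)]"
definition nP138 :: trie where "nP138 = Nd [(1,nP135),(0,nP137)]"
definition nP139 :: trie where "nP139 = Nd [(0,Lf)]"
definition nP140 :: trie where "nP140 = Nd [(0,nP139)]"
definition nP141 :: trie where "nP141 = Nd [(0,nP140)]"
definition nP142 :: trie where "nP142 = Nd [(1,nP138),(0,nP141)]"
definition nP143 :: trie where "nP143 = Nd [(2,nP132),(1,nP142)]"
definition nP144 :: trie where "nP144 = Nd [(2,nP118),(1,nP143)]"
definition nP145 :: trie where "nP145 = Nd [(1,Lf),(0,Lf)]"
definition nP146 :: trie where "nP146 = Nd [(0,Lf)]"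
definition nP147 :: trie where "nP147 = Nd [(1,nP145),(0,nP146)]"
definition nP148 :: trie where "nP148 = Nd [(0,Lf)]"
definition nP149 :: trie where "nP149 = Nd [(0,nP148)]"
definition nP150 :: trie where "nP150 = Nd [(1,nP147),(0,nP149)]"
definition nP151 :: trie where "nP151 = Nd [(0,Lf)]"
definition nP152 :: trie where "nP152 = Nd [(0,nP151)]"
definition nP153 :: trie where "nP153 = Nd [(0,nP152)]"
definition nP154 :: trie where "nP154 = Nd [(1,nP150),(0,nP153)]"
definition nP155 :: trie where "nP155 = Nd [(0,Lf)]"
definition nP156 :: trie where "nP156 = Nd [(0,nP155)]"
definition nP157 :: trie where "nP157 = Nd [(0,nP156)]"
definition nP158 :: trie where "nP158 = Nd [(0,nP157)]"
definition nP159 :: trie where "nP159 = Nd [(1,nP154),(0,nP158)]"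
definition nP160 :: trie where "nP160 = Nd [(0,Lf)]"
definition nP161 :: trie where "nP161 = Nd [(0,nP160)]"
definition nP162 :: trie where "nP162 = Nd [(0,nP161)]"
definition nP163 :: trie where "nP163 = Nd [(0,nP162)]"
definition nP164 :: trie where "nP164 = Nd [(0,nP163)]"
definition nP165 :: trie where "nP165 = Nd [(1,nP159),(0,nP164)]"
definition nP166 :: trie where "nP166 = Nd [(3,nP48),(2,nP89),(1,nP144),(0,nP165)]"
definition nP167 :: trie where "nP167 = Nd [(1,Lf)]"
definition nP168 :: trie where "nP168 = Nd [(1,Lf),(0,Lf)]"
definition nP169 :: trie where "nP169 = Nd [(2,nP167),(1,nP168)]"
definition nP170 :: trie where "nP170 = Nd [(1,Lf),(0,Lf)]"
definition nP171 :: trie where "nP171 = Nd [(0,Lf)]"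
definition nP172 :: trie where "nP172 = Nd [(1,nP170),(0,nP171)]"
definition nP173 :: trie where "nP173 = Nd [(2,nP169),(1,nP172)]"
definition nP174 :: trie where "nP174 = Nd [(1,Lf),(0,Lf)]"
definition nP175 :: trie where "nP175 = Nd [(0,Lf)]"
definition nP176 :: trie where "nP176 = Nd [(1,nP174),(0,nP175)]"
definition nP177 :: trie where "nP177 = Nd [(0,Lf)]"
definition nP178 :: trie where "nP178 = Nd [(0,nP177)]"
definition nP179 :: trie where "nP179 = Nd [(1,nP176),(0,nP178)]"
definition nP180 :: trie where "nP180 = Nd [(2,nP173),(1,nP179)]"
definition nP181 :: trie where "nP181 = Nd [(1,Lf),(0,Lf)]"
definition nP182 :: trie where "nP182 = Nd [(0,Lf)]"
definition nP183 :: trie where "nP183 = Nd [(1,nP181),(0,nP182)]"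
definition nP184 :: trie where "nP184 = Nd [(0,Lf)]"
definition nP185 :: trie where "nP185 = Nd [(0,nP184)]"
definition nP186 :: trie where "nP186 = Nd [(1,nP183),(0,nP185)]"
definition nP187 :: trie where "nP187 = Nd [(0,Lf)]"
definition nP188 :: trie where "nP188 = Nd [(0,nP187)]"
definition nP189 :: trie where "nP189 = Nd [(0,nP188)]"
definition nP190 :: trie where "nP190 = Nd [(1,nP186),(0,nP189)]"
definition nP191 :: trie where "nP191 = Nd [(2,nP180),(1,nP190)]"
definition nP192 :: trie where "nP192 = Nd [(1,Lf),(0,Lf)]"
definition nP193 :: trie where "nP193 = Nd [(0,Lf)]"
definition nP194 :: trie where "nP194 = Nd [(1,nP192),(0,nP193)]"
definition nP195 :: trie where "nP195 = Nd [(0,Lf)]"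
definition nP196 :: trie where "nP196 = Nd [(0,nP195)]"
definition nP197 :: trie where "nP197 = Nd [(1,nP194),(0,nP196)]"
definition nP198 :: trie where "nP198 = Nd [(0,Lf)]"
definition nP199 :: trie where "nP199 = Nd [(0,nP198)]"
definition nP200 :: trie where "nP200 = Nd [(0,nP199)]"
definition nP201 :: trie where "nP201 = Nd [(1,nP197),(0,nP200)]"
definition nP202 :: trie where "nP202 = Nd [(0,Lf)]"
definition nP203 :: trie where "nP203 = Nd [(0,nP202)]"
definition nP204 :: trie where "nP204 = Nd [(0,nP203)]"
definition nP205 :: trie where "nP205 = Nd [(0,nP204)]"
definition nP206 :: trie where "nP206 = Nd [(1,nP201),(0,nP205)]"
definition nP207 :: trie where "nP207 = Nd [(1,nP191),(0,nP206)]"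
definition nP208 :: trie where "nP208 = Nd [(1,Lf),(0,Lf)]"
definition nP209 :: trie where "nP209 = Nd [(0,Lf)]"
definition nP210 :: trie where "nP210 = Nd [(1,nP208),(0,nP209)]"
definition nP211 :: trie where "nP211 = Nd [(0,Lf)]"
definition nP212 :: trie where "nP212 = Nd [(0,nP211)]"
definition nP213 :: trie where "nP213 = Nd [(1,nP210),(0,nP212)]"
definition nP214 :: trie where "nP214 = Nd [(0,Lf)]"
definition nP215 :: trie where "nP215 = Nd [(0,nP214)]"
definition nP216 :: trie where "nP216 = Nd [(0,nP215)]"
definition nP217 :: trie where "nP217 = Nd [(1,nP213),(0,nP216)]"
definition nP218 :: trie where "nP218 = Nd [(0,Lf)]"
definition nP219 :: trie where "nP219 = Nd [(0,nP218)]"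
definition nP220 :: trie where "nP220 = Nd [(0,nP219)]"
definition nP221 :: trie where "nP221 = Nd [(0,nP220)]"
definition nP222 :: trie where "nP222 = Nd [(1,nP217),(0,nP221)]"
definition nP223 :: trie where "nP223 = Nd [(1,Lf),(0,Lf)]"
definition nP224 :: trie where "nP224 = Nd [(0,Lf)]"
definition nP225 :: trie where "nP225 = Nd [(1,nP223),(0,nP224)]"
definition nP226 :: trie where "nP226 = Nd [(0,Lf)]"
definition nP227 :: trie where "nP227 = Nd [(0,nP226)]"
definition nP228 :: trie where "nP228 = Nd [(1,nP225),(0,nP227)]"
definition nP229 :: trie where "nP229 = Nd [(0,Lf)]"
definition nP230 :: trie where "nP230 = Nd [(0,nP229)]"
definition nP231 :: trie where "nP231 = Nd [(0,nP230)]"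
definition nP232 :: trie where "nP232 = Nd [(1,nP228),(0,nP231)]"
definition nP233 :: trie where "nP233 = Nd [(1,Lf),(0,Lf)]"
definition nP234 :: trie where "nP234 = Nd [(0,Lf)]"
definition nP235 :: trie where "nP235 = Nd [(1,nP233),(0,nP234)]"
definition nP236 :: trie where "nP236 = Nd [(0,Lf)]"
definition nP237 :: trie where "nP237 = Nd [(0,nP236)]"
definition nP238 :: trie where "nP238 = Nd [(1,nP235),(0,nP237)]"
definition nP239 :: trie where "nP239 = Nd [(1,Lf),(0,Lf)]"
definition nP240 :: trie where "nP240 = Nd [(0,Lf)]"
definition nP241 :: trie where "nP241 = Nd [(1,nP239),(0,nP240)]"
definition nP242 :: trie where "nP242 = Nd [(1,Lf),(0,Lf)]"
definition nP243 :: trie where "nP243 = Nd [(1,Lf)]"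
definition nP244 :: trie where "nP244 = Nd [(1,nP242),(0,nP243)]"
definition nP245 :: trie where "nP245 = Nd [(1,nP241),(0,nP244)]"
definition nP246 :: trie where "nP246 = Nd [(1,nP238),(0,nP245)]"
definition nP247 :: trie where "nP247 = Nd [(1,nP232),(0,nP246)]"
definition nP248 :: trie where "nP248 = Nd [(1,nP222),(0,nP247)]"
definition nP249 :: trie where "nP249 = Nd [(1,nP207),(0,nP248)]"
definition nP250 :: trie where "nP250 = Nd [(2,nP42),(1,nP166),(0,nP249)]"
definition TP :: trie where "TP = nP250"
lemmas nP_defs = nP0_def nP1_def nP2_def nP3_def nP4_def nP5_def nP6_def nP7_def nP8_def nP9_def nP10_def nP11_def nP12_def nP13_def nP14_def nP15_def nP16_def nP17_def nP18_def nP19_def nP20_def nP21_def nP22_def nP23_def nP24_def nP25_def nP26_def nP27_def nP28_def nP29_def nP30_def nP31_def nP32_def nP33_def nP34_def nP35_def nP36_def nP37_def nP38_def nP39_def nP40_def nP41_def nP42_def nP43_def nP44_def nP45_def nP46_def nP47_def nP48_def nP49_def nP50_def nP51_def nP52_def nP53_def nP54_def nP55_def nP56_def nP57_def nP58_def nP59_def nP60_def nP61_def nP62_def nP63_def nP64_def nP65_def nP66_def nP67_def nP68_def nP69_def nP70_def nP71_def nP72_def nP73_def nP74_def nP75_def nP76_def nP77_def nP78_def nP79_def nP80_def nP81_def nP82_def nP83_def nP84_def nP85_def nP86_def nP87_def nP88_def nP89_def nP90_def nP91_def nP92_def nP93_def nP94_def nP95_def nP96_def nP97_def nP98_def nP99_def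 nP100_def nP101_def nP102_def nP103_def nP104_def nP105_def nP106_def nP107_def nP108_def nP109_def nP110_def nP111_def nP112_def nP113_def nP114_def nP115_def nP116_def nP117_def nP118_def nP119_def nP120_def nP121_def nP122_def nP123_def nP124_def nP125_def nP126_def nP127_def nP128_def nP129_def nP130_def nP131_def nP132_def nP133_def nP134_def nP135_def nP136_def nP137_def nP138_def nP139_def nP140_def nP141_def nP142_def nP143_def nP144_def nP145_def nP146_def nP147_def nP148_def nP149_def nP150_def nP151_def nP152_def nP153_def nP154_def nP155_def nP156_def nP157_def nP158_def nP159_def nP160_def nP161_def nP162_def nP163_def nP164_def nP165_def nP166_def nP167_def nP168_def nP169_def nP170_def nP171_def nP172_def nP173_def nP174_def nP175_def nP176_def nP177_def nP178_def nP179_def nP180_def nP181_def nP182_def nP183_def nP184_def nP185_def nP186_def nP187_def nP188_def nP189_def nP190_def nP191_def nP192_def nP193_def nP194_def nP195_def nP196_def nP197_def nP198_def nP199_def nP200_def nP201_def nP202_def nP203_def nP204_def nP205_def nP206_def nP207_def nP208_def nP209_def nP210_def nP211_def nP212_def nP213_def nP214_def nP215_def nP216_def nP217_def nP218_def nP219_def nP220_def nP221_def nP222_def nP223_def nP224_def nP225_def nP226_def nP227_def nP228_def nP229_def nP230_def nP231_def nP232_def nP233_def nP234_def nP235_def nP236_def nP237_def nP238_def nP239_def nP240_def nP241_def nP242_def nP243_def nP244_def nP245_def nP246_def nP247_def nP248_def nP249_def nP250_def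
lemma [simp]: "memT (a#xs) nP0 = (if a = 2 then memT xs Lf else (if a = 1 then memT xs Lf else False))" by (simp add: nP0_def)
lemma [simp]: "memT [] nP0 = False" by (simp add: nP0_def)
lemma [simp]: "memT (a#xs) nP1 = (if a = 1 then memT xs Lf else False)" by (simp add: nP1_def)
lemma [simp]: "memT [] nP1 = False" by (simp add: nP1_def)
lemma [simp]: "memT (a#xs) nP2 = (if a = 3 then memT xs nP0 else (if a = 2 then memT xs nP1 else False))" by (simp add: nP2_def)
lemma [simp]: "memT [] nP2 = False" by (simp add: nP2_def)
lemma [simp]: "memT (a#xs) nP3 = (if a = 1 then memT xs Lf else False)" by (simp add: nP3_def)
lemma [simp]: "memT [] nP3 = False" by (simp add: nP3_def)
lemma [simp]: "memT (a#xs) nP4 = (if a = 2 then memT xs nP3 else False)" by (simp add: nP4_def)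
lemma [simp]: "memT [] nP4 = False" by (simp add: nP4_def)
lemma [simp]: "memT (a#xs) nP5 = (if a = 4 then memT xs nP2 else (if a = 3 then memT xs nP4 else False))" by (simp add: nP5_def)
lemma [simp]: "memT [] nP5 = False" by (simp add: nP5_def)
lemma [simp]: "memT (a#xs) nP6 = (if a = 1 then memT xs Lf else False)" by (simp add: nP6_def)
lemma [simp]: "memT [] nP6 = False" by (simp add: nP6_def)
lemma [simp]: "memT (a#xs) nP7 = (if a = 2 then memT xs nP6 else False)" by (simp add: nP7_def)
lemma [simp]: "memT [] nP7 = False" by (simp add: nP7_def)
lemma [simp]: "memT (a#xs) nP8 = (if a = 3 then memT xs nP7 else False)" by (simp add: nP8_def)
lemma [simp]: "memT [] nP8 = False" by (simp add: nP8_def)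
lemma [simp]: "memT (a#xs) nP9 = (if a = 5 then memT xs nP5 else (if a = 4 then memT xs nP8 else False))" by (simp add: nP9_def)
lemma [simp]: "memT [] nP9 = False" by (simp add: nP9_def)
lemma [simp]: "memT (a#xs) nP10 = (if a = 1 then memT xs Lf else False)" by (simp add: nP10_def)
lemma [simp]: "memT [] nP10 = False" by (simp add: nP10_def)
lemma [simp]: "memT (a#xs) nP11 = (if a = 2 then memT xs nP10 else False)" by (simp add: nP11_def)
lemma [simp]: "memT [] nP11 = False" by (simp add: nP11_def)
lemma [simp]: "memT (a#xs) nP12 = (if a = 3 then memT xs nP11 else False)" by (simp add: nP12_def)
lemma [simp]: "memT [] nP12 = False" by (simp add: nP12_def)
lemma [simp]: "memT (a#xs) nP13 = (if a = 4 then memT xs nP12 else False)" by (simp add: nP13_def)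
lemma [simp]: "memT [] nP13 = False" by (simp add: nP13_def)
lemma [simp]: "memT (a#xs) nP14 = (if a = 6 then memT xs nP9 else (if a = 5 then memT xs nP13 else False))" by (simp add: nP14_def)
lemma [simp]: "memT [] nP14 = False" by (simp add: nP14_def)
lemma [simp]: "memT (a#xs) nP15 = (if a = 1 then memT xs Lf else False)" by (simp add: nP15_def)
lemma [simp]: "memT [] nP15 = False" by (simp add: nP15_def)
lemma [simp]: "memT (a#xs) nP16 = (if a = 2 then memT xs nP15 else False)" by (simp add: nP16_def)
lemma [simp]: "memT [] nP16 = False" by (simp add: nP16_def)
lemma [simp]: "memT (a#xs) nP17 = (if a = 3 then memT xs nP16 else False)" by (simp add: nP17_def)
lemma [simp]: "memT [] nP17 = False" by (simp add: nP17_def)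
lemma [simp]: "memT (a#xs) nP18 = (if a = 4 then memT xs nP17 else False)" by (simp add: nP18_def)
lemma [simp]: "memT [] nP18 = False" by (simp add: nP18_def)
lemma [simp]: "memT (a#xs) nP19 = (if a = 5 then memT xs nP18 else False)" by (simp add: nP19_def)
lemma [simp]: "memT [] nP19 = False" by (simp add: nP19_def)
lemma [simp]: "memT (a#xs) nP20 = (if a = 4 then memT xs nP14 else (if a = 3 then memT xs nP19 else False))" by (simp add: nP20_def)
lemma [simp]: "memT [] nP20 = False" by (simp add: nP20_def)
lemma [simp]: "memT (a#xs) nP21 = (if a = 1 then memT xs Lf else False)" by (simp add: nP21_def)
lemma [simp]: "memT [] nP21 = False" by (simp add: nP21_def)
lemma [simp]: "memT (a#xs) nP22 = (if a = 2 then memT xs nP21 else False)" by (simp add: nP22_def)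
lemma [simp]: "memT [] nP22 = False" by (simp add: nP22_def)
lemma [simp]: "memT (a#xs) nP23 = (if a = 3 then memT xs nP22 else False)" by (simp add: nP23_def)
lemma [simp]: "memT [] nP23 = False" by (simp add: nP23_def)
lemma [simp]: "memT (a#xs) nP24 = (if a = 4 then memT xs nP23 else False)" by (simp add: nP24_def)
lemma [simp]: "memT [] nP24 = False" by (simp add: nP24_def)
lemma [simp]: "memT (a#xs) nP25 = (if a = 5 then memT xs nP24 else False)" by (simp add: nP25_def)
lemma [simp]: "memT [] nP25 = False" by (simp add: nP25_def)
lemma [simp]: "memT (a#xs) nP26 = (if a = 1 then memT xs Lf else False)" by (simp add: nP26_def)
lemma [simp]: "memT [] nP26 = False" by (simp add: nP26_def)
lemma [simp]: "memT (a#xs) nP27 = (if a = 2 then memT xs nP26 else False)" by (simp add: nP27_def)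
lemma [simp]: "memT [] nP27 = False" by (simp add: nP27_def)
lemma [simp]: "memT (a#xs) nP28 = (if a = 3 then memT xs nP27 else False)" by (simp add: nP28_def)
lemma [simp]: "memT [] nP28 = False" by (simp add: nP28_def)
lemma [simp]: "memT (a#xs) nP29 = (if a = 4 then memT xs nP28 else False)" by (simp add: nP29_def)
lemma [simp]: "memT [] nP29 = False" by (simp add: nP29_def)
lemma [simp]: "memT (a#xs) nP30 = (if a = 1 then memT xs Lf else False)" by (simp add: nP30_def)
lemma [simp]: "memT [] nP30 = False" by (simp add: nP30_def)
lemma [simp]: "memT (a#xs) nP31 = (if a = 2 then memT xs nP30 else False)" by (simp add: nP31_def)
lemma [simp]: "memT [] nP31 = False" by (simp add: nP31_def)
lemma [simp]: "memT (a#xs) nP32 = (if a = 3 then memT xs nP31 else False)" by (simp add: nP32_def)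
lemma [simp]: "memT [] nP32 = False" by (simp add: nP32_def)
lemma [simp]: "memT (a#xs) nP33 = (if a = 1 then memT xs Lf else False)" by (simp add: nP33_def)
lemma [simp]: "memT [] nP33 = False" by (simp add: nP33_def)
lemma [simp]: "memT (a#xs) nP34 = (if a = 2 then memT xs nP33 else False)" by (simp add: nP34_def)
lemma [simp]: "memT [] nP34 = False" by (simp add: nP34_def)
lemma [simp]: "memT (a#xs) nP35 = (if a = 1 then memT xs Lf else False)" by (simp add: nP35_def)
lemma [simp]: "memT [] nP35 = False" by (simp add: nP35_def)
lemma [simp]: "memT (a#xs) nP36 = (if a = 1 then memT xs Lf else (if a = 0 then memT xs Lf else False))" by (simp add: nP36_def)
lemma [simp]: "memT [] nP36 = False" by (simp add: nP36_def)
lemma [simp]: "memT (a#xs) nP37 = (if a = 2 then memT xs nP35 else (if a = 1 then memT xs nP36 else False))" by (simp add: nP37_def)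
lemma [simp]: "memT [] nP37 = False" by (simp add: nP37_def)
lemma [simp]: "memT (a#xs) nP38 = (if a = 3 then memT xs nP34 else (if a = 2 then memT xs nP37 else False))" by (simp add: nP38_def)
lemma [simp]: "memT [] nP38 = False" by (simp add: nP38_def)
lemma [simp]: "memT (a#xs) nP39 = (if a = 4 then memT xs nP32 else (if a = 3 then memT xs nP38 else False))" by (simp add: nP39_def)
lemma [simp]: "memT [] nP39 = False" by (simp add: nP39_def)
lemma [simp]: "memT (a#xs) nP40 = (if a = 5 then memT xs nP29 else (if a = 4 then memT xs nP39 else False))" by (simp add: nP40_def)
lemma [simp]: "memT [] nP40 = False" by (simp add: nP40_def)
lemma [simp]: "memT (a#xs) nP41 = (if a = 4 then memT xs nP25 else (if a = 3 then memT xs nP40 else False))" by (simp add: nP41_def)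
lemma [simp]: "memT [] nP41 = False" by (simp add: nP41_def)
lemma [simp]: "memT (a#xs) nP42 = (if a = 3 then memT xs nP20 else (if a = 2 then memT xs nP41 else False))" by (simp add: nP42_def)
lemma [simp]: "memT [] nP42 = False" by (simp add: nP42_def)
lemma [simp]: "memT (a#xs) nP43 = (if a = 1 then memT xs Lf else False)" by (simp add: nP43_def)
lemma [simp]: "memT [] nP43 = False" by (simp add: nP43_def)
lemma [simp]: "memT (a#xs) nP44 = (if a = 2 then memT xs nP43 else False)" by (simp add: nP44_def)
lemma [simp]: "memT [] nP44 = False" by (simp add: nP44_def)
lemma [simp]: "memT (a#xs) nP45 = (if a = 3 then memT xs nP44 else False)" by (simp add: nP45_def)
lemma [simp]: "memT [] nP45 = False" by (simp add: nP45_def)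
lemma [simp]: "memT (a#xs) nP46 = (if a = 4 then memT xs nP45 else False)" by (simp add: nP46_def)
lemma [simp]: "memT [] nP46 = False" by (simp add: nP46_def)
lemma [simp]: "memT (a#xs) nP47 = (if a = 5 then memT xs nP46 else False)" by (simp add: nP47_def)
lemma [simp]: "memT [] nP47 = False" by (simp add: nP47_def)
lemma [simp]: "memT (a#xs) nP48 = (if a = 3 then memT xs nP47 else False)" by (simp add: nP48_def)
lemma [simp]: "memT [] nP48 = False" by (simp add: nP48_def)
lemma [simp]: "memT (a#xs) nP49 = (if a = 1 then memT xs Lf else False)" by (simp add: nP49_def)
lemma [simp]: "memT [] nP49 = False" by (simp add: nP49_def)
lemma [simp]: "memT (a#xs) nP50 = (if a = 2 then memT xs nP49 else False)" by (simp add: nP50_def)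
lemma [simp]: "memT [] nP50 = False" by (simp add: nP50_def)
lemma [simp]: "memT (a#xs) nP51 = (if a = 3 then memT xs nP50 else False)" by (simp add: nP51_def)
lemma [simp]: "memT [] nP51 = False" by (simp add: nP51_def)
lemma [simp]: "memT (a#xs) nP52 = (if a = 4 then memT xs nP51 else False)" by (simp add: nP52_def)
lemma [simp]: "memT [] nP52 = False" by (simp add: nP52_def)
lemma [simp]: "memT (a#xs) nP53 = (if a = 1 then memT xs Lf else False)" by (simp add: nP53_def)
lemma [simp]: "memT [] nP53 = False" by (simp add: nP53_def)
lemma [simp]: "memT (a#xs) nP54 = (if a = 2 then memT xs nP53 else False)" by (simp add: nP54_def)
lemma [simp]: "memT [] nP54 = False" by (simp add: nP54_def)
lemma [simp]: "memT (a#xs) nP55 = (if a = 3 then memT xs nP54 else False)" by (simp add: nP55_def)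
lemma [simp]: "memT [] nP55 = False" by (simp add: nP55_def)
lemma [simp]: "memT (a#xs) nP56 = (if a = 1 then memT xs Lf else False)" by (simp add: nP56_def)
lemma [simp]: "memT [] nP56 = False" by (simp add: nP56_def)
lemma [simp]: "memT (a#xs) nP57 = (if a = 2 then memT xs nP56 else False)" by (simp add: nP57_def)
lemma [simp]: "memT [] nP57 = False" by (simp add: nP57_def)
lemma [simp]: "memT (a#xs) nP58 = (if a = 1 then memT xs Lf else False)" by (simp add: nP58_def)
lemma [simp]: "memT [] nP58 = False" by (simp add: nP58_def)
lemma [simp]: "memT (a#xs) nP59 = (if a = 1 then memT xs Lf else (if a = 0 then memT xs Lf else False))" by (simp add: nP59_def)
lemma [simp]: "memT [] nP59 = False" by (simp add: nP59_def)
lemma [simp]: "memT (a#xs) nP60 = (if a = 2 then memT xs nP58 else (if a = 1 then memT xs nP59 else False))" by (simp add: nP60_def)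
lemma [simp]: "memT [] nP60 = False" by (simp add: nP60_def)
lemma [simp]: "memT (a#xs) nP61 = (if a = 3 then memT xs nP57 else (if a = 2 then memT xs nP60 else False))" by (simp add: nP61_def)
lemma [simp]: "memT [] nP61 = False" by (simp add: nP61_def)
lemma [simp]: "memT (a#xs) nP62 = (if a = 4 then memT xs nP55 else (if a = 3 then memT xs nP61 else False))" by (simp add: nP62_def)
lemma [simp]: "memT [] nP62 = False" by (simp add: nP62_def)
lemma [simp]: "memT (a#xs) nP63 = (if a = 5 then memT xs nP52 else (if a = 4 then memT xs nP62 else False))" by (simp add: nP63_def)
lemma [simp]: "memT [] nP63 = False" by (simp add: nP63_def)
lemma [simp]: "memT (a#xs) nP64 = (if a = 1 then memT xs Lf else False)" by (simp add: nP64_def)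
lemma [simp]: "memT [] nP64 = False" by (simp add: nP64_def)
lemma [simp]: "memT (a#xs) nP65 = (if a = 2 then memT xs nP64 else False)" by (simp add: nP65_def)
lemma [simp]: "memT [] nP65 = False" by (simp add: nP65_def)
lemma [simp]: "memT (a#xs) nP66 = (if a = 3 then memT xs nP65 else False)" by (simp add: nP66_def)
lemma [simp]: "memT [] nP66 = False" by (simp add: nP66_def)
lemma [simp]: "memT (a#xs) nP67 = (if a = 1 then memT xs Lf else False)" by (simp add: nP67_def)
lemma [simp]: "memT [] nP67 = False" by (simp add: nP67_def)
lemma [simp]: "memT (a#xs) nP68 = (if a = 2 then memT xs nP67 else False)" by (simp add: nP68_def)
lemma [simp]: "memT [] nP68 = False" by (simp add: nP68_def)
lemma [simp]: "memT (a#xs) nP69 = (if a = 1 then memT xs Lf else False)" by (simp add: nP69_def)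
lemma [simp]: "memT [] nP69 = False" by (simp add: nP69_def)
lemma [simp]: "memT (a#xs) nP70 = (if a = 1 then memT xs Lf else (if a = 0 then memT xs Lf else False))" by (simp add: nP70_def)
lemma [simp]: "memT [] nP70 = False" by (simp add: nP70_def)
lemma [simp]: "memT (a#xs) nP71 = (if a = 2 then memT xs nP69 else (if a = 1 then memT xs nP70 else False))" by (simp add: nP71_def)
lemma [simp]: "memT [] nP71 = False" by (simp add: nP71_def)
lemma [simp]: "memT (a#xs) nP72 = (if a = 3 then memT xs nP68 else (if a = 2 then memT xs nP71 else False))" by (simp add: nP72_def)
lemma [simp]: "memT [] nP72 = False" by (simp add: nP72_def)
lemma [simp]: "memT (a#xs) nP73 = (if a = 4 then memT xs nP66 else (if a = 3 then memT xs nP72 else False))" by (simp add: nP73_def)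
lemma [simp]: "memT [] nP73 = False" by (simp add: nP73_def)
lemma [simp]: "memT (a#xs) nP74 = (if a = 1 then memT xs Lf else False)" by (simp add: nP74_def)
lemma [simp]: "memT [] nP74 = False" by (simp add: nP74_def)
lemma [simp]: "memT (a#xs) nP75 = (if a = 2 then memT xs nP74 else False)" by (simp add: nP75_def)
lemma [simp]: "memT [] nP75 = False" by (simp add: nP75_def)
lemma [simp]: "memT (a#xs) nP76 = (if a = 1 then memT xs Lf else False)" by (simp add: nP76_def)
lemma [simp]: "memT [] nP76 = False" by (simp add: nP76_def)
lemma [simp]: "memT (a#xs) nP77 = (if a = 1 then memT xs Lf else (if a = 0 then memT xs Lf else False))" by (simp add: nP77_def)
lemma [simp]: "memT [] nP77 = False" by (simp add: nP77_def)
lemma [simp]: "memT (a#xs) nP78 = (if a = 2 then memT xs nP76 else (if a = 1 then memT xs nP77 else False))" by (simp add: nP78_def)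
lemma [simp]: "memT [] nP78 = False" by (simp add: nP78_def)
lemma [simp]: "memT (a#xs) nP79 = (if a = 3 then memT xs nP75 else (if a = 2 then memT xs nP78 else False))" by (simp add: nP79_def)
lemma [simp]: "memT [] nP79 = False" by (simp add: nP79_def)
lemma [simp]: "memT (a#xs) nP80 = (if a = 1 then memT xs Lf else False)" by (simp add: nP80_def)
lemma [simp]: "memT [] nP80 = False" by (simp add: nP80_def)
lemma [simp]: "memT (a#xs) nP81 = (if a = 1 then memT xs Lf else (if a = 0 then memT xs Lf else False))" by (simp add: nP81_def)
lemma [simp]: "memT [] nP81 = False" by (simp add: nP81_def)
lemma [simp]: "memT (a#xs) nP82 = (if a = 2 then memT xs nP80 else (if a = 1 then memT xs nP81 else False))" by (simp add: nP82_def)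
lemma [simp]: "memT [] nP82 = False" by (simp add: nP82_def)
lemma [simp]: "memT (a#xs) nP83 = (if a = 1 then memT xs Lf else (if a = 0 then memT xs Lf else False))" by (simp add: nP83_def)
lemma [simp]: "memT [] nP83 = False" by (simp add: nP83_def)
lemma [simp]: "memT (a#xs) nP84 = (if a = 0 then memT xs Lf else False)" by (simp add: nP84_def)
lemma [simp]: "memT [] nP84 = False" by (simp add: nP84_def)
lemma [simp]: "memT (a#xs) nP85 = (if a = 1 then memT xs nP83 else (if a = 0 then memT xs nP84 else False))" by (simp add: nP85_def)
lemma [simp]: "memT [] nP85 = False" by (simp add: nP85_def)
lemma [simp]: "memT (a#xs) nP86 = (if a = 2 then memT xs nP82 else (if a = 1 then memT xs nP85 else False))" by (simp add: nP86_def)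
lemma [simp]: "memT [] nP86 = False" by (simp add: nP86_def)
lemma [simp]: "memT (a#xs) nP87 = (if a = 3 then memT xs nP79 else (if a = 2 then memT xs nP86 else False))" by (simp add: nP87_def)
lemma [simp]: "memT [] nP87 = False" by (simp add: nP87_def)
lemma [simp]: "memT (a#xs) nP88 = (if a = 4 then memT xs nP73 else (if a = 3 then memT xs nP87 else False))" by (simp add: nP88_def)
lemma [simp]: "memT [] nP88 = False" by (simp add: nP88_def)
lemma [simp]: "memT (a#xs) nP89 = (if a = 3 then memT xs nP63 else (if a = 2 then memT xs nP88 else False))" by (simp add: nP89_def)
lemma [simp]: "memT [] nP89 = False" by (simp add: nP89_def)
lemma [simp]: "memT (a#xs) nP90 = (if a = 1 then memT xs Lf else False)" by (simp add: nP90_def)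
lemma [simp]: "memT [] nP90 = False" by (simp add: nP90_def)
lemma [simp]: "memT (a#xs) nP91 = (if a = 2 then memT xs nP90 else False)" by (simp add: nP91_def)
lemma [simp]: "memT [] nP91 = False" by (simp add: nP91_def)
lemma [simp]: "memT (a#xs) nP92 = (if a = 1 then memT xs Lf else False)" by (simp add: nP92_def)
lemma [simp]: "memT [] nP92 = False" by (simp add: nP92_def)
lemma [simp]: "memT (a#xs) nP93 = (if a = 1 then memT xs Lf else (if a = 0 then memT xs Lf else False))" by (simp add: nP93_def)
lemma [simp]: "memT [] nP93 = False" by (simp add: nP93_def)
lemma [simp]: "memT (a#xs) nP94 = (if a = 2 then memT xs nP92 else (if a = 1 then memT xs nP93 else False))" by (simp add: nP94_def)
lemma [simp]: "memT [] nP94 = False" by (simp add: nP94_def)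
lemma [simp]: "memT (a#xs) nP95 = (if a = 3 then memT xs nP91 else (if a = 2 then memT xs nP94 else False))" by (simp add: nP95_def)
lemma [simp]: "memT [] nP95 = False" by (simp add: nP95_def)
lemma [simp]: "memT (a#xs) nP96 = (if a = 1 then memT xs Lf else False)" by (simp add: nP96_def)
lemma [simp]: "memT [] nP96 = False" by (simp add: nP96_def)
lemma [simp]: "memT (a#xs) nP97 = (if a = 1 then memT xs Lf else (if a = 0 then memT xs Lf else False))" by (simp add: nP97_def)
lemma [simp]: "memT [] nP97 = False" by (simp add: nP97_def)
lemma [simp]: "memT (a#xs) nP98 = (if a = 2 then memT xs nP96 else (if a = 1 then memT xs nP97 else False))" by (simp add: nP98_def)
lemma [simp]: "memT [] nP98 = False" by (simp add: nP98_def)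
lemma [simp]: "memT (a#xs) nP99 = (if a = 1 then memT xs Lf else (if a = 0 then memT xs Lf else False))" by (simp add: nP99_def)
lemma [simp]: "memT [] nP99 = False" by (simp add: nP99_def)
lemma [simp]: "memT (a#xs) nP100 = (if a = 0 then memT xs Lf else False)" by (simp add: nP100_def)
lemma [simp]: "memT [] nP100 = False" by (simp add: nP100_def)
lemma [simp]: "memT (a#xs) nP101 = (if a = 1 then memT xs nP99 else (if a = 0 then memT xs nP100 else False))" by (simp add: nP101_def)
lemma [simp]: "memT [] nP101 = False" by (simp add: nP101_def)
lemma [simp]: "memT (a#xs) nP102 = (if a = 2 then memT xs nP98 else (if a = 1 then memT xs nP101 else False))" by (simp add: nP102_def)
lemma [simp]: "memT [] nP102 = False" by (simp add: nP102_def)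
lemma [simp]: "memT (a#xs) nP103 = (if a = 3 then memT xs nP95 else (if a = 2 then memT xs nP102 else False))" by (simp add: nP103_def)
lemma [simp]: "memT [] nP103 = False" by (simp add: nP103_def)
lemma [simp]: "memT (a#xs) nP104 = (if a = 1 then memT xs Lf else False)" by (simp add: nP104_def)
lemma [simp]: "memT [] nP104 = False" by (simp add: nP104_def)
lemma [simp]: "memT (a#xs) nP105 = (if a = 1 then memT xs Lf else (if a = 0 then memT xs Lf else False))" by (simp add: nP105_def)
lemma [simp]: "memT [] nP105 = False" by (simp add: nP105_def)
lemma [simp]: "memT (a#xs) nP106 = (if a = 2 then memT xs nP104 else (if a = 1 then memT xs nP105 else False))" by (simp add: nP106_def)
lemma [simp]: "memT [] nP106 = False" by (simp add: nP106_def)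
lemma [simp]: "memT (a#xs) nP107 = (if a = 1 then memT xs Lf else (if a = 0 then memT xs Lf else False))" by (simp add: nP107_def)
lemma [simp]: "memT [] nP107 = False" by (simp add: nP107_def)
lemma [simp]: "memT (a#xs) nP108 = (if a = 0 then memT xs Lf else False)" by (simp add: nP108_def)
lemma [simp]: "memT [] nP108 = False" by (simp add: nP108_def)
lemma [simp]: "memT (a#xs) nP109 = (if a = 1 then memT xs nP107 else (if a = 0 then memT xs nP108 else False))" by (simp add: nP109_def)
lemma [simp]: "memT [] nP109 = False" by (simp add: nP109_def)
lemma [simp]: "memT (a#xs) nP110 = (if a = 2 then memT xs nP106 else (if a = 1 then memT xs nP109 else False))" by (simp add: nP110_def)
lemma [simp]: "memT [] nP110 = False" by (simp add: nP110_def)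
lemma [simp]: "memT (a#xs) nP111 = (if a = 1 then memT xs Lf else (if a = 0 then memT xs Lf else False))" by (simp add: nP111_def)
lemma [simp]: "memT [] nP111 = False" by (simp add: nP111_def)
lemma [simp]: "memT (a#xs) nP112 = (if a = 0 then memT xs Lf else False)" by (simp add: nP112_def)
lemma [simp]: "memT [] nP112 = False" by (simp add: nP112_def)
lemma [simp]: "memT (a#xs) nP113 = (if a = 1 then memT xs nP111 else (if a = 0 then memT xs nP112 else False))" by (simp add: nP113_def)
lemma [simp]: "memT [] nP113 = False" by (simp add: nP113_def)
lemma [simp]: "memT (a#xs) nP114 = (if a = 0 then memT xs Lf else False)" by (simp add: nP114_def)
lemma [simp]: "memT [] nP114 = False" by (simp add: nP114_def)
lemma [simp]: "memT (a#xs) nP115 = (if a = 0 then memT xs nP114 else False)" by (simp add: nP115_def)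
lemma [simp]: "memT [] nP115 = False" by (simp add: nP115_def)
lemma [simp]: "memT (a#xs) nP116 = (if a = 1 then memT xs nP113 else (if a = 0 then memT xs nP115 else False))" by (simp add: nP116_def)
lemma [simp]: "memT [] nP116 = False" by (simp add: nP116_def)
lemma [simp]: "memT (a#xs) nP117 = (if a = 2 then memT xs nP110 else (if a = 1 then memT xs nP116 else False))" by (simp add: nP117_def)
lemma [simp]: "memT [] nP117 = False" by (simp add: nP117_def)
lemma [simp]: "memT (a#xs) nP118 = (if a = 3 then memT xs nP103 else (if a = 2 then memT xs nP117 else False))" by (simp add: nP118_def)
lemma [simp]: "memT [] nP118 = False" by (simp add: nP118_def)
lemma [simp]: "memT (a#xs) nP119 = (if a = 1 then memT xs Lf else False)" by (simp add: nP119_def)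
lemma [simp]: "memT [] nP119 = False" by (simp add: nP119_def)
lemma [simp]: "memT (a#xs) nP120 = (if a = 1 then memT xs Lf else (if a = 0 then memT xs Lf else False))" by (simp add: nP120_def)
lemma [simp]: "memT [] nP120 = False" by (simp add: nP120_def)
lemma [simp]: "memT (a#xs) nP121 = (if a = 2 then memT xs nP119 else (if a = 1 then memT xs nP120 else False))" by (simp add: nP121_def)
lemma [simp]: "memT [] nP121 = False" by (simp add: nP121_def)
lemma [simp]: "memT (a#xs) nP122 = (if a = 1 then memT xs Lf else (if a = 0 then memT xs Lf else False))" by (simp add: nP122_def)
lemma [simp]: "memT [] nP122 = False" by (simp add: nP122_def)
lemma [simp]: "memT (a#xs) nP123 = (if a = 0 then memT xs Lf else False)" by (simp add: nP123_def)
lemma [simp]: "memT [] nP123 = False" by (simp add: nP123_def)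
lemma [simp]: "memT (a#xs) nP124 = (if a = 1 then memT xs nP122 else (if a = 0 then memT xs nP123 else False))" by (simp add: nP124_def)
lemma [simp]: "memT [] nP124 = False" by (simp add: nP124_def)
lemma [simp]: "memT (a#xs) nP125 = (if a = 2 then memT xs nP121 else (if a = 1 then memT xs nP124 else False))" by (simp add: nP125_def)
lemma [simp]: "memT [] nP125 = False" by (simp add: nP125_def)
lemma [simp]: "memT (a#xs) nP126 = (if a = 1 then memT xs Lf else (if a = 0 then memT xs Lf else False))" by (simp add: nP126_def)
lemma [simp]: "memT [] nP126 = False" by (simp add: nP126_def)
lemma [simp]: "memT (a#xs) nP127 = (if a = 0 then memT xs Lf else False)" by (simp add: nP127_def)
lemma [simp]: "memT [] nP127 = False" by (simp add: nP127_def)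
lemma [simp]: "memT (a#xs) nP128 = (if a = 1 then memT xs nP126 else (if a = 0 then memT xs nP127 else False))" by (simp add: nP128_def)
lemma [simp]: "memT [] nP128 = False" by (simp add: nP128_def)
lemma [simp]: "memT (a#xs) nP129 = (if a = 0 then memT xs Lf else False)" by (simp add: nP129_def)
lemma [simp]: "memT [] nP129 = False" by (simp add: nP129_def)
lemma [simp]: "memT (a#xs) nP130 = (if a = 0 then memT xs nP129 else False)" by (simp add: nP130_def)
lemma [simp]: "memT [] nP130 = False" by (simp add: nP130_def)
lemma [simp]: "memT (a#xs) nP131 = (if a = 1 then memT xs nP128 else (if a = 0 then memT xs nP130 else False))" by (simp add: nP131_def)
lemma [simp]: "memT [] nP131 = False" by (simp add: nP131_def)
lemma [simp]: "memT (a#xs) nP132 = (if a = 2 then memT xs nP125 else (if a = 1 then memT xs nP131 else False))" by (simp add: nP132_def)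
lemma [simp]: "memT [] nP132 = False" by (simp add: nP132_def)
lemma [simp]: "memT (a#xs) nP133 = (if a = 1 then memT xs Lf else (if a = 0 then memT xs Lf else False))" by (simp add: nP133_def)
lemma [simp]: "memT [] nP133 = False" by (simp add: nP133_def)
lemma [simp]: "memT (a#xs) nP134 = (if a = 0 then memT xs Lf else False)" by (simp add: nP134_def)
lemma [simp]: "memT [] nP134 = False" by (simp add: nP134_def)
lemma [simp]: "memT (a#xs) nP135 = (if a = 1 then memT xs nP133 else (if a = 0 then memT xs nP134 else False))" by (simp add: nP135_def)
lemma [simp]: "memT [] nP135 = False" by (simp add: nP135_def)
lemma [simp]: "memT (a#xs) nP136 = (if a = 0 then memT xs Lf else False)" by (simp add: nP136_def)
lemma [simp]: "memT [] nP136 = False" by (simp add: nP136_def)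
lemma [simp]: "memT (a#xs) nP137 = (if a = 0 then memT xs nP136 else False)" by (simp add: nP137_def)
lemma [simp]: "memT [] nP137 = False" by (simp add: nP137_def)
lemma [simp]: "memT (a#xs) nP138 = (if a = 1 then memT xs nP135 else (if a = 0 then memT xs nP137 else False))" by (simp add: nP138_def)
lemma [simp]: "memT [] nP138 = False" by (simp add: nP138_def)
lemma [simp]: "memT (a#xs) nP139 = (if a = 0 then memT xs Lf else False)" by (simp add: nP139_def)
lemma [simp]: "memT [] nP139 = False" by (simp add: nP139_def)
lemma [simp]: "memT (a#xs) nP140 = (if a = 0 then memT xs nP139 else False)" by (simp add: nP140_def)
lemma [simp]: "memT [] nP140 = False" by (simp add: nP140_def)
lemma [simp]: "memT (a#xs) nP141 = (if a = 0 then memT xs nP140 else False)" by (simp add: nP141_def)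
lemma [simp]: "memT [] nP141 = False" by (simp add: nP141_def)
lemma [simp]: "memT (a#xs) nP142 = (if a = 1 then memT xs nP138 else (if a = 0 then memT xs nP141 else False))" by (simp add: nP142_def)
lemma [simp]: "memT [] nP142 = False" by (simp add: nP142_def)
lemma [simp]: "memT (a#xs) nP143 = (if a = 2 then memT xs nP132 else (if a = 1 then memT xs nP142 else False))" by (simp add: nP143_def)
lemma [simp]: "memT [] nP143 = False" by (simp add: nP143_def)
lemma [simp]: "memT (a#xs) nP144 = (if a = 2 then memT xs nP118 else (if a = 1 then memT xs nP143 else False))" by (simp add: nP144_def)
lemma [simp]: "memT [] nP144 = False" by (simp add: nP144_def)
lemma [simp]: "memT (a#xs) nP145 = (if a = 1 then memT xs Lf else (if a = 0 then memT xs Lf else False))" by (simp add: nP145_def)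
lemma [simp]: "memT [] nP145 = False" by (simp add: nP145_def)
lemma [simp]: "memT (a#xs) nP146 = (if a = 0 then memT xs Lf else False)" by (simp add: nP146_def)
lemma [simp]: "memT [] nP146 = False" by (simp add: nP146_def)
lemma [simp]: "memT (a#xs) nP147 = (if a = 1 then memT xs nP145 else (if a = 0 then memT xs nP146 else False))" by (simp add: nP147_def)
lemma [simp]: "memT [] nP147 = False" by (simp add: nP147_def)
lemma [simp]: "memT (a#xs) nP148 = (if a = 0 then memT xs Lf else False)" by (simp add: nP148_def)
lemma [simp]: "memT [] nP148 = False" by (simp add: nP148_def)
lemma [simp]: "memT (a#xs) nP149 = (if a = 0 then memT xs nP148 else False)" by (simp add: nP149_def)
lemma [simp]: "memT [] nP149 = False" by (simp add: nP149_def)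
lemma [simp]: "memT (a#xs) nP150 = (if a = 1 then memT xs nP147 else (if a = 0 then memT xs nP149 else False))" by (simp add: nP150_def)
lemma [simp]: "memT [] nP150 = False" by (simp add: nP150_def)
lemma [simp]: "memT (a#xs) nP151 = (if a = 0 then memT xs Lf else False)" by (simp add: nP151_def)
lemma [simp]: "memT [] nP151 = False" by (simp add: nP151_def)
lemma [simp]: "memT (a#xs) nP152 = (if a = 0 then memT xs nP151 else False)" by (simp add: nP152_def)
lemma [simp]: "memT [] nP152 = False" by (simp add: nP152_def)
lemma [simp]: "memT (a#xs) nP153 = (if a = 0 then memT xs nP152 else False)" by (simp add: nP153_def)
lemma [simp]: "memT [] nP153 = False" by (simp add: nP153_def)
lemma [simp]: "memT (a#xs) nP154 = (if a = 1 then memT xs nP150 else (if a = 0 then memT xs nP153 else False))" by (simp add: nP154_def)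
lemma [simp]: "memT [] nP154 = False" by (simp add: nP154_def)
lemma [simp]: "memT (a#xs) nP155 = (if a = 0 then memT xs Lf else False)" by (simp add: nP155_def)
lemma [simp]: "memT [] nP155 = False" by (simp add: nP155_def)
lemma [simp]: "memT (a#xs) nP156 = (if a = 0 then memT xs nP155 else False)" by (simp add: nP156_def)
lemma [simp]: "memT [] nP156 = False" by (simp add: nP156_def)
lemma [simp]: "memT (a#xs) nP157 = (if a = 0 then memT xs nP156 else False)" by (simp add: nP157_def)
lemma [simp]: "memT [] nP157 = False" by (simp add: nP157_def)
lemma [simp]: "memT (a#xs) nP158 = (if a = 0 then memT xs nP157 else False)" by (simp add: nP158_def)
lemma [simp]: "memT [] nP158 = False" by (simp add: nP158_def)
lemma [simp]: "memT (a#xs) nP159 = (if a = 1 then memT xs nP154 else (if a = 0 then memT xs nP158 else False))" by (simp add: nP159_def)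
lemma [simp]: "memT [] nP159 = False" by (simp add: nP159_def)
lemma [simp]: "memT (a#xs) nP160 = (if a = 0 then memT xs Lf else False)" by (simp add: nP160_def)
lemma [simp]: "memT [] nP160 = False" by (simp add: nP160_def)
lemma [simp]: "memT (a#xs) nP161 = (if a = 0 then memT xs nP160 else False)" by (simp add: nP161_def)
lemma [simp]: "memT [] nP161 = False" by (simp add: nP161_def)
lemma [simp]: "memT (a#xs) nP162 = (if a = 0 then memT xs nP161 else False)" by (simp add: nP162_def)
lemma [simp]: "memT [] nP162 = False" by (simp add: nP162_def)
lemma [simp]: "memT (a#xs) nP163 = (if a = 0 then memT xs nP162 else False)" by (simp add: nP163_def)
lemma [simp]: "memT [] nP163 = False" by (simp add: nP163_def)
lemma [simp]: "memT (a#xs) nP164 = (if a = 0 then memT xs nP163 else False)" by (simp add: nP164_def)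
lemma [simp]: "memT [] nP164 = False" by (simp add: nP164_def)
lemma [simp]: "memT (a#xs) nP165 = (if a = 1 then memT xs nP159 else (if a = 0 then memT xs nP164 else False))" by (simp add: nP165_def)
lemma [simp]: "memT [] nP165 = False" by (simp add: nP165_def)
lemma [simp]: "memT (a#xs) nP166 = (if a = 3 then memT xs nP48 else (if a = 2 then memT xs nP89 else (if a = 1 then memT xs nP144 else (if a = 0 then memT xs nP165 else False))))" by (simp add: nP166_def)
lemma [simp]: "memT [] nP166 = False" by (simp add: nP166_def)
lemma [simp]: "memT (a#xs) nP167 = (if a = 1 then memT xs Lf else False)" by (simp add: nP167_def)
lemma [simp]: "memT [] nP167 = False" by (simp add: nP167_def)
lemma [simp]: "memT (a#xs) nP168 = (if a = 1 then memT xs Lf else (if a = 0 then memT xs Lf else False))" by (simp add: nP168_def)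
lemma [simp]: "memT [] nP168 = False" by (simp add: nP168_def)
lemma [simp]: "memT (a#xs) nP169 = (if a = 2 then memT xs nP167 else (if a = 1 then memT xs nP168 else False))" by (simp add: nP169_def)
lemma [simp]: "memT [] nP169 = False" by (simp add: nP169_def)
lemma [simp]: "memT (a#xs) nP170 = (if a = 1 then memT xs Lf else (if a = 0 then memT xs Lf else False))" by (simp add: nP170_def)
lemma [simp]: "memT [] nP170 = False" by (simp add: nP170_def)
lemma [simp]: "memT (a#xs) nP171 = (if a = 0 then memT xs Lf else False)" by (simp add: nP171_def)
lemma [simp]: "memT [] nP171 = False" by (simp add: nP171_def)
lemma [simp]: "memT (a#xs) nP172 = (if a = 1 then memT xs nP170 else (if a = 0 then memT xs nP171 else False))" by (simp add: nP172_def)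
lemma [simp]: "memT [] nP172 = False" by (simp add: nP172_def)
lemma [simp]: "memT (a#xs) nP173 = (if a = 2 then memT xs nP169 else (if a = 1 then memT xs nP172 else False))" by (simp add: nP173_def)
lemma [simp]: "memT [] nP173 = False" by (simp add: nP173_def)
lemma [simp]: "memT (a#xs) nP174 = (if a = 1 then memT xs Lf else (if a = 0 then memT xs Lf else False))" by (simp add: nP174_def)
lemma [simp]: "memT [] nP174 = False" by (simp add: nP174_def)
lemma [simp]: "memT (a#xs) nP175 = (if a = 0 then memT xs Lf else False)" by (simp add: nP175_def)
lemma [simp]: "memT [] nP175 = False" by (simp add: nP175_def)
lemma [simp]: "memT (a#xs) nP176 = (if a = 1 then memT xs nP174 else (if a = 0 then memT xs nP175 else False))" by (simp add: nP176_def)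
lemma [simp]: "memT [] nP176 = False" by (simp add: nP176_def)
lemma [simp]: "memT (a#xs) nP177 = (if a = 0 then memT xs Lf else False)" by (simp add: nP177_def)
lemma [simp]: "memT [] nP177 = False" by (simp add: nP177_def)
lemma [simp]: "memT (a#xs) nP178 = (if a = 0 then memT xs nP177 else False)" by (simp add: nP178_def)
lemma [simp]: "memT [] nP178 = False" by (simp add: nP178_def)
lemma [simp]: "memT (a#xs) nP179 = (if a = 1 then memT xs nP176 else (if a = 0 then memT xs nP178 else False))" by (simp add: nP179_def)
lemma [simp]: "memT [] nP179 = False" by (simp add: nP179_def)
lemma [simp]: "memT (a#xs) nP180 = (if a = 2 then memT xs nP173 else (if a = 1 then memT xs nP179 else False))" by (simp add: nP180_def)
lemma [simp]: "memT [] nP180 = False" by (simp add: nP180_def)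
lemma [simp]: "memT (a#xs) nP181 = (if a = 1 then memT xs Lf else (if a = 0 then memT xs Lf else False))" by (simp add: nP181_def)
lemma [simp]: "memT [] nP181 = False" by (simp add: nP181_def)
lemma [simp]: "memT (a#xs) nP182 = (if a = 0 then memT xs Lf else False)" by (simp add: nP182_def)
lemma [simp]: "memT [] nP182 = False" by (simp add: nP182_def)
lemma [simp]: "memT (a#xs) nP183 = (if a = 1 then memT xs nP181 else (if a = 0 then memT xs nP182 else False))" by (simp add: nP183_def)
lemma [simp]: "memT [] nP183 = False" by (simp add: nP183_def)
lemma [simp]: "memT (a#xs) nP184 = (if a = 0 then memT xs Lf else False)" by (simp add: nP184_def)
lemma [simp]: "memT [] nP184 = False" by (simp add: nP184_def)
lemma [simp]: "memT (a#xs) nP185 = (if a = 0 then memT xs nP184 else False)" by (simp add: nP185_def)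
lemma [simp]: "memT [] nP185 = False" by (simp add: nP185_def)
lemma [simp]: "memT (a#xs) nP186 = (if a = 1 then memT xs nP183 else (if a = 0 then memT xs nP185 else False))" by (simp add: nP186_def)
lemma [simp]: "memT [] nP186 = False" by (simp add: nP186_def)
lemma [simp]: "memT (a#xs) nP187 = (if a = 0 then memT xs Lf else False)" by (simp add: nP187_def)
lemma [simp]: "memT [] nP187 = False" by (simp add: nP187_def)
lemma [simp]: "memT (a#xs) nP188 = (if a = 0 then memT xs nP187 else False)" by (simp add: nP188_def)
lemma [simp]: "memT [] nP188 = False" by (simp add: nP188_def)
lemma [simp]: "memT (a#xs) nP189 = (if a = 0 then memT xs nP188 else False)" by (simp add: nP189_def)
lemma [simp]: "memT [] nP189 = False" by (simp add: nP189_def)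
lemma [simp]: "memT (a#xs) nP190 = (if a = 1 then memT xs nP186 else (if a = 0 then memT xs nP189 else False))" by (simp add: nP190_def)
lemma [simp]: "memT [] nP190 = False" by (simp add: nP190_def)
lemma [simp]: "memT (a#xs) nP191 = (if a = 2 then memT xs nP180 else (if a = 1 then memT xs nP190 else False))" by (simp add: nP191_def)
lemma [simp]: "memT [] nP191 = False" by (simp add: nP191_def)
lemma [simp]: "memT (a#xs) nP192 = (if a = 1 then memT xs Lf else (if a = 0 then memT xs Lf else False))" by (simp add: nP192_def)
lemma [simp]: "memT [] nP192 = False" by (simp add: nP192_def)
lemma [simp]: "memT (a#xs) nP193 = (if a = 0 then memT xs Lf else False)" by (simp add: nP193_def)
lemma [simp]: "memT [] nP193 = False" by (simp add: nP193_def)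
lemma [simp]: "memT (a#xs) nP194 = (if a = 1 then memT xs nP192 else (if a = 0 then memT xs nP193 else False))" by (simp add: nP194_def)
lemma [simp]: "memT [] nP194 = False" by (simp add: nP194_def)
lemma [simp]: "memT (a#xs) nP195 = (if a = 0 then memT xs Lf else False)" by (simp add: nP195_def)
lemma [simp]: "memT [] nP195 = False" by (simp add: nP195_def)
lemma [simp]: "memT (a#xs) nP196 = (if a = 0 then memT xs nP195 else False)" by (simp add: nP196_def)
lemma [simp]: "memT [] nP196 = False" by (simp add: nP196_def)
lemma [simp]: "memT (a#xs) nP197 = (if a = 1 then memT xs nP194 else (if a = 0 then memT xs nP196 else False))" by (simp add: nP197_def)
lemma [simp]: "memT [] nP197 = False" by (simp add: nP197_def)
lemma [simp]: "memT (a#xs) nP198 = (if a = 0 then memT xs Lf else False)" by (simp add: nP198_def)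
lemma [simp]: "memT [] nP198 = False" by (simp add: nP198_def)
lemma [simp]: "memT (a#xs) nP199 = (if a = 0 then memT xs nP198 else False)" by (simp add: nP199_def)
lemma [simp]: "memT [] nP199 = False" by (simp add: nP199_def)
lemma [simp]: "memT (a#xs) nP200 = (if a = 0 then memT xs nP199 else False)" by (simp add: nP200_def)
lemma [simp]: "memT [] nP200 = False" by (simp add: nP200_def)
lemma [simp]: "memT (a#xs) nP201 = (if a = 1 then memT xs nP197 else (if a = 0 then memT xs nP200 else False))" by (simp add: nP201_def)
lemma [simp]: "memT [] nP201 = False" by (simp add: nP201_def)
lemma [simp]: "memT (a#xs) nP202 = (if a = 0 then memT xs Lf else False)" by (simp add: nP202_def)
lemma [simp]: "memT [] nP202 = False" by (simp add: nP202_def)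
lemma [simp]: "memT (a#xs) nP203 = (if a = 0 then memT xs nP202 else False)" by (simp add: nP203_def)
lemma [simp]: "memT [] nP203 = False" by (simp add: nP203_def)
lemma [simp]: "memT (a#xs) nP204 = (if a = 0 then memT xs nP203 else False)" by (simp add: nP204_def)
lemma [simp]: "memT [] nP204 = False" by (simp add: nP204_def)
lemma [simp]: "memT (a#xs) nP205 = (if a = 0 then memT xs nP204 else False)" by (simp add: nP205_def)
lemma [simp]: "memT [] nP205 = False" by (simp add: nP205_def)
lemma [simp]: "memT (a#xs) nP206 = (if a = 1 then memT xs nP201 else (if a = 0 then memT xs nP205 else False))" by (simp add: nP206_def)
lemma [simp]: "memT [] nP206 = False" by (simp add: nP206_def)
lemma [simp]: "memT (a#xs) nP207 = (if a = 1 then memT xs nP191 else (if a = 0 then memT xs nP206 else False))" by (simp add: nP207_def)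
lemma [simp]: "memT [] nP207 = False" by (simp add: nP207_def)
lemma [simp]: "memT (a#xs) nP208 = (if a = 1 then memT xs Lf else (if a = 0 then memT xs Lf else False))" by (simp add: nP208_def)
lemma [simp]: "memT [] nP208 = False" by (simp add: nP208_def)
lemma [simp]: "memT (a#xs) nP209 = (if a = 0 then memT xs Lf else False)" by (simp add: nP209_def)
lemma [simp]: "memT [] nP209 = False" by (simp add: nP209_def)
lemma [simp]: "memT (a#xs) nP210 = (if a = 1 then memT xs nP208 else (if a = 0 then memT xs nP209 else False))" by (simp add: nP210_def)
lemma [simp]: "memT [] nP210 = False" by (simp add: nP210_def)
lemma [simp]: "memT (a#xs) nP211 = (if a = 0 then memT xs Lf else False)" by (simp add: nP211_def)
lemma [simp]: "memT [] nP211 = False" by (simp add: nP211_def)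
lemma [simp]: "memT (a#xs) nP212 = (if a = 0 then memT xs nP211 else False)" by (simp add: nP212_def)
lemma [simp]: "memT [] nP212 = False" by (simp add: nP212_def)
lemma [simp]: "memT (a#xs) nP213 = (if a = 1 then memT xs nP210 else (if a = 0 then memT xs nP212 else False))" by (simp add: nP213_def)
lemma [simp]: "memT [] nP213 = False" by (simp add: nP213_def)
lemma [simp]: "memT (a#xs) nP214 = (if a = 0 then memT xs Lf else False)" by (simp add: nP214_def)
lemma [simp]: "memT [] nP214 = False" by (simp add: nP214_def)
lemma [simp]: "memT (a#xs) nP215 = (if a = 0 then memT xs nP214 else False)" by (simp add: nP215_def)
lemma [simp]: "memT [] nP215 = False" by (simp add: nP215_def)
lemma [simp]: "memT (a#xs) nP216 = (if a = 0 then memT xs nP215 else False)" by (simp add: nP216_def)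
lemma [simp]: "memT [] nP216 = False" by (simp add: nP216_def)
lemma [simp]: "memT (a#xs) nP217 = (if a = 1 then memT xs nP213 else (if a = 0 then memT xs nP216 else False))" by (simp add: nP217_def)
lemma [simp]: "memT [] nP217 = False" by (simp add: nP217_def)
lemma [simp]: "memT (a#xs) nP218 = (if a = 0 then memT xs Lf else False)" by (simp add: nP218_def)
lemma [simp]: "memT [] nP218 = False" by (simp add: nP218_def)
lemma [simp]: "memT (a#xs) nP219 = (if a = 0 then memT xs nP218 else False)" by (simp add: nP219_def)
lemma [simp]: "memT [] nP219 = False" by (simp add: nP219_def)
lemma [simp]: "memT (a#xs) nP220 = (if a = 0 then memT xs nP219 else False)" by (simp add: nP220_def)
lemma [simp]: "memT [] nP220 = False" by (simp add: nP220_def)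
lemma [simp]: "memT (a#xs) nP221 = (if a = 0 then memT xs nP220 else False)" by (simp add: nP221_def)
lemma [simp]: "memT [] nP221 = False" by (simp add: nP221_def)
lemma [simp]: "memT (a#xs) nP222 = (if a = 1 then memT xs nP217 else (if a = 0 then memT xs nP221 else False))" by (simp add: nP222_def)
lemma [simp]: "memT [] nP222 = False" by (simp add: nP222_def)
lemma [simp]: "memT (a#xs) nP223 = (if a = 1 then memT xs Lf else (if a = 0 then memT xs Lf else False))" by (simp add: nP223_def)
lemma [simp]: "memT [] nP223 = False" by (simp add: nP223_def)
lemma [simp]: "memT (a#xs) nP224 = (if a = 0 then memT xs Lf else False)" by (simp add: nP224_def)
lemma [simp]: "memT [] nP224 = False" by (simp add: nP224_def)
lemma [simp]: "memT (a#xs) nP225 = (if a = 1 then memT xs nP223 else (if a = 0 then memT xs nP224 else False))" by (simp add: nP225_def)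
lemma [simp]: "memT [] nP225 = False" by (simp add: nP225_def)
lemma [simp]: "memT (a#xs) nP226 = (if a = 0 then memT xs Lf else False)" by (simp add: nP226_def)
lemma [simp]: "memT [] nP226 = False" by (simp add: nP226_def)
lemma [simp]: "memT (a#xs) nP227 = (if a = 0 then memT xs nP226 else False)" by (simp add: nP227_def)
lemma [simp]: "memT [] nP227 = False" by (simp add: nP227_def)
lemma [simp]: "memT (a#xs) nP228 = (if a = 1 then memT xs nP225 else (if a = 0 then memT xs nP227 else False))" by (simp add: nP228_def)
lemma [simp]: "memT [] nP228 = False" by (simp add: nP228_def)
lemma [simp]: "memT (a#xs) nP229 = (if a = 0 then memT xs Lf else False)" by (simp add: nP229_def)
lemma [simp]: "memT [] nP229 = False" by (simp add: nP229_def)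
lemma [simp]: "memT (a#xs) nP230 = (if a = 0 then memT xs nP229 else False)" by (simp add: nP230_def)
lemma [simp]: "memT [] nP230 = False" by (simp add: nP230_def)
lemma [simp]: "memT (a#xs) nP231 = (if a = 0 then memT xs nP230 else False)" by (simp add: nP231_def)
lemma [simp]: "memT [] nP231 = False" by (simp add: nP231_def)
lemma [simp]: "memT (a#xs) nP232 = (if a = 1 then memT xs nP228 else (if a = 0 then memT xs nP231 else False))" by (simp add: nP232_def)
lemma [simp]: "memT [] nP232 = False" by (simp add: nP232_def)
lemma [simp]: "memT (a#xs) nP233 = (if a = 1 then memT xs Lf else (if a = 0 then memT xs Lf else False))" by (simp add: nP233_def)
lemma [simp]: "memT [] nP233 = False" by (simp add: nP233_def)
lemma [simp]: "memT (a#xs) nP234 = (if a = 0 then memT xs Lf else False)" by (simp add: nP234_def)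
lemma [simp]: "memT [] nP234 = False" by (simp add: nP234_def)
lemma [simp]: "memT (a#xs) nP235 = (if a = 1 then memT xs nP233 else (if a = 0 then memT xs nP234 else False))" by (simp add: nP235_def)
lemma [simp]: "memT [] nP235 = False" by (simp add: nP235_def)
lemma [simp]: "memT (a#xs) nP236 = (if a = 0 then memT xs Lf else False)" by (simp add: nP236_def)
lemma [simp]: "memT [] nP236 = False" by (simp add: nP236_def)
lemma [simp]: "memT (a#xs) nP237 = (if a = 0 then memT xs nP236 else False)" by (simp add: nP237_def)
lemma [simp]: "memT [] nP237 = False" by (simp add: nP237_def)
lemma [simp]: "memT (a#xs) nP238 = (if a = 1 then memT xs nP235 else (if a = 0 then memT xs nP237 else False))" by (simp add: nP238_def)
lemma [simp]: "memT [] nP238 = False" by (simp add: nP238_def)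
lemma [simp]: "memT (a#xs) nP239 = (if a = 1 then memT xs Lf else (if a = 0 then memT xs Lf else False))" by (simp add: nP239_def)
lemma [simp]: "memT [] nP239 = False" by (simp add: nP239_def)
lemma [simp]: "memT (a#xs) nP240 = (if a = 0 then memT xs Lf else False)" by (simp add: nP240_def)
lemma [simp]: "memT [] nP240 = False" by (simp add: nP240_def)
lemma [simp]: "memT (a#xs) nP241 = (if a = 1 then memT xs nP239 else (if a = 0 then memT xs nP240 else False))" by (simp add: nP241_def)
lemma [simp]: "memT [] nP241 = False" by (simp add: nP241_def)
lemma [simp]: "memT (a#xs) nP242 = (if a = 1 then memT xs Lf else (if a = 0 then memT xs Lf else False))" by (simp add: nP242_def)
lemma [simp]: "memT [] nP242 = False" by (simp add: nP242_def)
lemma [simp]: "memT (a#xs) nP243 = (if a = 1 then memT xs Lf else False)" by (simp add: nP243_def)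
lemma [simp]: "memT [] nP243 = False" by (simp add: nP243_def)
lemma [simp]: "memT (a#xs) nP244 = (if a = 1 then memT xs nP242 else (if a = 0 then memT xs nP243 else False))" by (simp add: nP244_def)
lemma [simp]: "memT [] nP244 = False" by (simp add: nP244_def)
lemma [simp]: "memT (a#xs) nP245 = (if a = 1 then memT xs nP241 else (if a = 0 then memT xs nP244 else False))" by (simp add: nP245_def)
lemma [simp]: "memT [] nP245 = False" by (simp add: nP245_def)
lemma [simp]: "memT (a#xs) nP246 = (if a = 1 then memT xs nP238 else (if a = 0 then memT xs nP245 else False))" by (simp add: nP246_def)
lemma [simp]: "memT [] nP246 = False" by (simp add: nP246_def)
lemma [simp]: "memT (a#xs) nP247 = (if a = 1 then memT xs nP232 else (if a = 0 then memT xs nP246 else False))" by (simp add: nP247_def)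
lemma [simp]: "memT [] nP247 = False" by (simp add: nP247_def)
lemma [simp]: "memT (a#xs) nP248 = (if a = 1 then memT xs nP222 else (if a = 0 then memT xs nP247 else False))" by (simp add: nP248_def)
lemma [simp]: "memT [] nP248 = False" by (simp add: nP248_def)
lemma [simp]: "memT (a#xs) nP249 = (if a = 1 then memT xs nP207 else (if a = 0 then memT xs nP248 else False))" by (simp add: nP249_def)
lemma [simp]: "memT [] nP249 = False" by (simp add: nP249_def)
lemma [simp]: "memT (a#xs) nP250 = (if a = 2 then memT xs nP42 else (if a = 1 then memT xs nP166 else (if a = 0 then memT xs nP249 else False)))" by (simp add: nP250_def)
lemma [simp]: "memT [] nP250 = False" by (simp add: nP250_def)
definition V3 :: "int list list" where "V3 = [[1,0,1,0,0,0,0,0],[0,1,0,0,0,0,0,0],[0,0,1,0,0,0,0,0]]"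
definition NB3 :: "nat list list" where "NB3 = [[2],[],[0]]"
definition CP3 :: "nat list list" where "CP3 = [[],[1],[0,2]]"
definition sol3 :: "nat list" where "sol3 = [1,2,3]"
definition V4 :: "int list list" where "V4 = [[1,1,1,1,0,0,0,0],[1,0,1,1,0,0,0,0],[0,1,1,1,0,0,0,0],[0,1,0,1,0,0,0,0],[0,0,1,1,0,0,0,0],[0,0,0,1,0,0,0,0]]"
definition NB4 :: "nat list list" where "NB4 = [[2,1],[4,0],[4,3,0],[5,2],[5,1,2],[3,4]]"
definition CP4 :: "nat list list" where "CP4 = [[],[],[0],[],[1,2],[3,4,5]]"
definition sol4 :: "nat list" where "sol4 = [3,1,4,2,3,4]"
definition V5 :: "int list list" where "V5 = [[1,1,2,2,1,0,0,0],[1,1,1,2,1,0,0,0],[1,1,1,1,1,0,0,0],[1,0,1,1,1,0,0,0],[0,1,1,2,1,0,0,0],[0,1,1,1,1,0,0,0],[0,1,0,1,1,0,0,0],[0,0,1,1,1,0,0,0],[0,0,0,1,1,0,0,0],[0,0,0,0,1,0,0,0]]"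
definition NB5 :: "nat list list" where "NB5 = [[1],[4,2,0],[5,3,1],[7,2],[5,1],[7,6,2,4],[8,5],[8,3,5],[9,6,7],[8]]"
definition CP5 :: "nat list list" where "CP5 = [[],[0],[],[],[1],[2,4],[],[3,5],[6,7],[8,9]]"
definition sol5 :: "nat list" where "sol5 = [2,4,3,1,5,4,2,3,4,5]"
definition V6 :: "int list list" where "V6 = [[1,2,2,3,2,1,0,0],[1,1,2,3,2,1,0,0],[1,1,2,2,2,1,0,0],[1,1,2,2,1,1,0,0],[1,1,1,2,2,1,0,0],[1,1,1,2,1,1,0,0],[1,1,1,1,1,1,0,0],[1,0,1,1,1,1,0,0],[0,1,1,2,2,1,0,0],[0,1,1,2,1,1,0,0],[0,1,1,1,1,1,0,0],[0,1,0,1,1,1,0,0],[0,0,1,1,1,1,0,0],[0,0,0,1,1,1,0,0],[0,0,0,0,1,1,0,0],[0,0,0,0,0,1,0,0]]"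
definition NB6 :: "nat list list" where "NB6 = [[1],[2,0],[4,3,1],[5,2],[8,5,2],[9,6,3,4],[10,7,5],[12,6],[9,4],[10,5,8],[12,11,6,9],[13,10],[13,7,10],[14,11,12],[15,13],[14]]"
definition CP6 :: "nat list list" where "CP6 = [[],[0],[1],[],[2],[3],[],[],[4],[5,8],[6,9],[],[7,10],[11,12],[13],[14,15]]"
definition sol6 :: "nat list" where "sol6 = [1,3,4,2,5,4,3,1,6,5,4,2,3,4,5,6]"
definition V7 :: "int list list" where "V7 = [[2,2,3,4,3,2,1,0],[1,2,3,4,3,2,1,0],[1,2,2,4,3,2,1,0],[1,2,2,3,3,2,1,0],[1,2,2,3,2,2,1,0],[1,2,2,3,2,1,1,0],[1,1,2,3,3,2,1,0],[1,1,2,3,2,2,1,0],[1,1,2,3,2,1,1,0],[1,1,2,2,2,2,1,0],[1,1,2,2,2,1,1,0],[1,1,2,2,1,1,1,0],[1,1,1,2,2,2,1,0],[1,1,1,2,2,1,1,0],[1,1,1,2,1,1,1,0],[1,1,1,1,1,1,1,0],[1,0,1,1,1,1,1,0],[0,1,1,2,2,2,1,0],[0,1,1,2,2,1,1,0],[0,1,1,2,1,1,1,0],[0,1,1,1,1,1,1,0],[0,1,0,1,1,1,1,0],[0,0,1,1,1,1,1,0],[0,0,0,1,1,1,1,0],[0,0,0,0,1,1,1,0],[0,0,0,0,0,1,1,0],[0,0,0,0,0,0,1,0]]"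
definition NB7 :: "nat list list" where "NB7 = [[1],[2,0],[3,1],[6,4,2],[7,5,3],[8,4],[7,3],[9,8,4,6],[10,5,7],[12,10,7],[13,11,8,9],[14,10],[17,13,9],[18,14,10,12],[19,15,11,13],[20,16,14],[22,15],[18,12],[19,13,17],[20,14,18],[22,21,15,19],[23,20],[23,16,20],[24,21,22],[25,23],[26,24],[25]]"
definition CP7 :: "nat list list" where "CP7 = [[],[0],[1],[2],[],[],[3],[4,6],[5],[7],[8],[],[9],[10],[11],[],[],[12],[13,17],[14,18],[15,19],[],[16,20],[21,22],[23],[24],[25,26]]"
definition sol7 :: "nat list" where "sol7 = [7,6,5,4,3,1,2,4,3,5,4,2,6,5,4,3,1,7,6,5,4,2,3,4,5,6,7]"
definition V8 :: "int list list" where "V8 = [[2,3,4,6,5,4,3,2],[2,3,4,6,5,4,3,1],[2,3,4,6,5,4,2,1],[2,3,4,6,5,3,2,1],[2,3,4,6,4,3,2,1],[2,3,4,5,4,3,2,1],[2,3,3,5,4,3,2,1],[2,2,4,5,4,3,2,1],[2,2,3,5,4,3,2,1],[2,2,3,4,4,3,2,1],[2,2,3,4,3,3,2,1],[2,2,3,4,3,2,2,1],[2,2,3,4,3,2,1,1],[1,3,3,5,4,3,2,1],[1,2,3,5,4,3,2,1],[1,2,3,4,4,3,2,1],[1,2,3,4,3,3,2,1],[1,2,3,4,3,2,2,1],[1,2,3,4,3,2,1,1],[1,2,2,4,4,3,2,1],[1,2,2,4,3,3,2,1],[1,2,2,4,3,2,2,1],[1,2,2,4,3,2,1,1],[1,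2,2,3,3,3,2,1],[1,2,2,3,3,2,2,1],[1,2,2,3,3,2,1,1],[1,2,2,3,2,2,2,1],[1,2,2,3,2,2,1,1],[1,2,2,3,2,1,1,1],[1,1,2,3,3,3,2,1],[1,1,2,3,3,2,2,1],[1,1,2,3,3,2,1,1],[1,1,2,3,2,2,2,1],[1,1,2,3,2,2,1,1],[1,1,2,3,2,1,1,1],[1,1,2,2,2,2,2,1],[1,1,2,2,2,2,1,1],[1,1,2,2,2,1,1,1],[1,1,2,2,1,1,1,1],[1,1,1,2,2,2,2,1],[1,1,1,2,2,2,1,1],[1,1,1,2,2,1,1,1],[1,1,1,2,1,1,1,1],[1,1,1,1,1,1,1,1],[1,0,1,1,1,1,1,1],[0,1,1,2,2,2,2,1],[0,1,1,2,2,2,1,1],[0,1,1,2,2,1,1,1],[0,1,1,2,1,1,1,1],[0,1,1,1,1,1,1,1],[0,1,0,1,1,1,1,1],[0,0,1,1,1,1,1,1],[0,0,0,1,1,1,1,1],[0,0,0,0,1,1,1,1],[0,0,0,0,0,1,1,1],[0,0,0,0,0,0,1,1],[0,0,0,0,0,0,0,1]]"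
definition NB8 :: "nat list list" where "NB8 = [[1],[2,0],[3,1],[4,2],[5,3],[7,6,4],[13,8,5],[8,5],[14,9,6,7],[15,10,8],[16,11,9],[17,12,10],[18,11],[14,6],[15,8,13],[19,16,9,14],[20,17,10,15],[21,18,11,16],[22,12,17],[20,15],[23,21,16,19],[24,22,17,20],[25,18,21],[29,24,20],[30,26,25,21,23],[31,27,22,24],[32,27,24],[33,28,25,26],[34,27],[30,23],[32,31,24,29],[33,25,30],[35,33,26,30],[36,34,27,31,32],[37,28,33],[39,36,32],[40,37,33,35],[41,38,34,36],[42,37],[45,40,35],[46,41,36,39],[47,42,37,40],[48,43,38,41],[49,44,42],[51,43],[46,39],[47,40,45],[48,41,46],[49,42,47],[51,50,43,48],[52,49],[52,44,49],[53,50,51],[54,52],[55,53],[56,54],[55]]"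
definition CP8 :: "nat list list" where "CP8 = [[],[0],[1],[2],[3],[4],[],[5],[7],[],[],[],[],[6],[8,13],[9,14],[10],[11],[12],[15],[16,19],[17],[18],[20],[21],[22],[],[],[],[23],[24,29],[25],[26,30],[27,31],[28],[32],[33],[34],[],[35],[36],[37],[38],[],[],[39],[40,45],[41,46],[42,47],[43,48],[],[44,49],[50,51],[52],[53],[54],[55,56]]"

lemma rf_neg: "length x = 8 \<Longrightarrow> rf i (map uminus x) = map uminus (rf i x)"
  by (drule len8) auto

definition inRA :: "int list \<Rightarrow> bool" where "inRA x = (memT x TP \<or> memT (map uminus x) TP)"

lemma flatTP: "flatT TP = RP" by (simp add: TP_def RP_def nP_defs)

lemma memTP: "memT x TP \<Longrightarrow> x \<in> set RP"
  using memT_sound flatTP by metis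

lemma chk_len: "list_all (\<lambda>x. length x = 8) RP" by (simp add: RP_def)
lemma chk_nonneg: "list_all (list_all (\<lambda>v. 0 \<le> v)) RP" by (simp add: RP_def)
lemma chk_pos: "list_all (list_ex (\<lambda>v. 0 < v)) RP" by (simp add: RP_def)
lemma chk_compl: "list_all (\<lambda>x. memT x TP) RP" by (simp add: RP_def TP_def)
lemma chk_simple: "list_all (\<lambda>i. memT (eL i) TP) [1,2,3,4,5,6,7,8]" by (simp add: eL_def TP_def)
lemma chk_closed: "list_all (\<lambda>x. list_all (\<lambda>i. inRA (rf i x)) [1,2,3,4,5,6,7,8]) RP"
  by (simp add: RP_def TP_def inRA_def)
lemma chk_parent: "list_all (\<lambda>x. list_ex (\<lambda>i. x = eL i) [1,2,3,4,5,6,7,8] \<or>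
   list_ex (\<lambda>i. memT (subL x (eL i)) TP \<and> rf i (subL x (eL i)) = x \<and> sum_list (subL x (eL i)) < sum_list x) [1,2,3,4,5,6,7,8]) RP"
  by (simp add: RP_def TP_def eL_def)


lemma RP_len: "x \<in> set RP \<Longrightarrow> length x = 8"
  using chk_len by (simp add: list_all_iff)

lemma roots_sub: "\<beta> \<in> roots \<Longrightarrow> \<exists>x\<in>set RP. \<beta> = vec x \<or> \<beta> = vec (map uminus x)"
proof (induction rule: roots.induct)
  case (simple i)
  have "memT (eL i) TP" using chk_simple simple unfolding set18 by auto
  then show ?case using memTP simple_vec[OF simple] by blast
next
  case (refl \<beta> i)
  then obtain x where x: "x \<in> set RP" "\<beta> = vec x \<or> \<beta> = vec (map uminus x)" by blast
  have l: "length x = 8" using RP_len x(1) .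
  have "inRA (rf i x)" using chk_closed x(1) refl(2) unfolding set18 by (auto simp: list_all_iff)
  then have c: "rf i x \<in> set RP \<or> map uminus (rf i x) \<in> set RP" unfolding inRA_def using memTP by blast
  have r1: "reflect i (vec x) = vec (rf i x)" using reflect_vec[OF l refl(2)] .
  have r2: "reflect i (vec (map uminus x)) = vec (map uminus (rf i x))"
    using reflect_vec[of "map uminus x" i] l refl(2) rf_neg[OF l] by simp
  show ?case
  proof (cases "rf i x \<in> set RP")
    case True
    then show ?thesis using x(2) r1 r2 by blast
  next
    case False
    then have m: "map uminus (rf i x) \<in> set RP" using c by blast
    have "map uminus (map uminus (rf i x)) = rf i x" by (simp add: comp_def)
    then show ?thesis using x(2) r1 r2 m by metis
  qed
qed

lemma RP_roots_aux: "\<forall>x. x \<in> set RP \<and> nat (sum_list x) = n \<longrightarrow> vec x \<in> roots"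
proof (induction n rule: less_induct)
  case (less n)
  show ?case
  proof (intro allI impI)
    fix x assume x: "x \<in> set RP \<and> nat (sum_list x) = n"
    have l: "length x = 8" using RP_len x by blast
    have "list_ex (\<lambda>i. x = eL i) [1,2,3,4,5,6,7,8] \<or>
      list_ex (\<lambda>i. memT (subL x (eL i)) TP \<and> rf i (subL x (eL i)) = x \<and> sum_list (subL x (eL i)) < sum_list x) [1,2,3,4,5,6,7,8]"
      using chk_parent x by (simp add: list_all_iff)
    then show "vec x \<in> roots"
    proof
      assume "list_ex (\<lambda>i. x = eL i) [1,2,3,4,5,6,7,8]"
      then obtain i where "i \<in> {1..8}" "x = eL i" unfolding set18 by auto
      then show ?thesis using simple_vec roots.simple by metis
    next
      assume "list_ex (\<lambda>i. memT (subL x (eL i)) TP \<and> rf i (subL x (eL i)) = x \<and> sum_list (subL x (eL i)) < sum_list x) [1,2,3,4,5,6,7,8]"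
      then obtain i where i: "i \<in> {1..8}" "memT (subL x (eL i)) TP" "rf i (subL x (eL i)) = x" "sum_list (subL x (eL i)) < sum_list x"
        unfolding set18 by auto
      define y where "y = subL x (eL i)"
      have y: "y \<in> set RP" using i(2) memTP y_def by blast
      have "0 \<le> sum_list y" using chk_nonneg y by (auto simp: list_all_iff intro: sum_list_nonneg)
      then have "nat (sum_list y) < n" using i(4) x y_def by auto
      then have "vec y \<in> roots" using less y by blast
      then have "reflect i (vec y) \<in> roots" using i(1) roots.refl by blast
      then show ?thesis using reflect_vec[OF RP_len[OF y] i(1)] i(3) y_def by simp
    qed
  qed
qed

lemma RP_roots: "x \<in> set RP \<Longrightarrow> vec x \<in> roots"
  using RP_roots_aux by blast

lemma vec_nonneg: "x \<in> set RP \<Longrightarrow> 0 \<le> vec x j"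
proof -
  assume x: "x \<in> set RP"
  have "length x = 8" using RP_len x .
  then show ?thesis using chk_nonneg x by (auto simp: vec_def list_all_iff)
qed

lemma neg_not_pos: assumes "x \<in> set RP" shows "\<exists>j. vec (map uminus x) j < 0"
proof -
  have l: "length x = 8" using RP_len assms .
  obtain v where "v \<in> set x" "0 < v" using chk_pos assms by (auto simp: list_all_iff list_ex_iff)
  then obtain k where k: "k < length x" "x ! k = v" by (auto simp: in_set_conv_nth)
  have "vec (map uminus x) (k+1) = - v" using k l by (auto simp: vec_def)
  then show ?thesis using \<open>0 < v\<close> by (metis neg_less_0_iff_less)
qed

lemma pos_roots_eq: "pos_roots = vec ` set RP"
proof
  show "pos_roots \<subseteq> vec ` set RP"
  proof
    fix \<beta> assume b: "\<beta> \<in> pos_roots"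
    then obtain x where x: "x \<in> set RP" "\<beta> = vec x \<or> \<beta> = vec (map uminus x)"
      using roots_sub unfolding pos_roots_def by blast
    have "\<beta> \<noteq> vec (map uminus x)" using neg_not_pos[OF x(1)] b unfolding pos_roots_def by (metis (mono_tags, lifting) mem_Collect_eq not_le)
    then show "\<beta> \<in> vec ` set RP" using x by blast
  qed
next
  show "vec ` set RP \<subseteq> pos_roots"
    unfolding pos_roots_def using RP_roots vec_nonneg by blast
qed


definition stP :: "nat \<Rightarrow> nat \<Rightarrow> bool" where
  "stP s m = (if s = 3 then m = 2 \<or> m = 3 else m = s)"

lemma chk_mx: "list_all (\<lambda>x. mxL x \<noteq> 0) RP" by (simp add: RP_def)

lemma stratum_eq: assumes "s \<in> {3..8}"
  shows "stratum s = vec ` set (filter (\<lambda>x. stP s (mxL x)) RP)"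
proof -
  have mx: "x \<in> set RP \<Longrightarrow> mx (vec x) = mxL x" for x
    using mx_vec RP_len chk_mx by (auto simp: list_all_iff)
  have s1: "s \<noteq> 1" using assms by auto
  show ?thesis
  proof (cases "s = 3")
    case True
    then show ?thesis unfolding stratum_def pos_roots_eq stP_def using mx by force
  next
    case False
    then show ?thesis unfolding stratum_def pos_roots_eq stP_def using mx s1 by force
  qed
qed

definition okL :: "nat \<Rightarrow> nat list list \<Rightarrow> nat list \<Rightarrow> bool" where
  "okL s NB hs \<longleftrightarrow> length hs = length NB \<and> (\<forall>k<length NB. hs!k \<in> {1..s} \<and>
     (\<forall>l\<in>set (NB!k). adjL (hs!k) (hs!l)) \<and> (nth hs) ` set (NB!k) = {b\<in>{1..s}. adjL (hs!k) b})"

definition goodV :: "nat \<Rightarrow> int list list \<Rightarrow> nat list list \<Rightarrow> bool" where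
  "goodV s V NB \<longleftrightarrow> stratum s = vec ` set V \<and> (\<forall>x\<in>set V. length x = 8) \<and> length NB = length V \<and>
     (\<forall>k<length V. map (nth V) (NB!k) = filter (\<lambda>y. y \<in> set V) (cands (V!k))) \<and>
     (\<forall>k<length V. \<forall>l\<in>set (NB!k). l < length V)"

lemma nbhd_V: assumes "goodV s V NB" "k < length V"
  shows "nbhd (stratum s) H_E (vec (V!k)) = vec ` nth V ` set (NB!k)"
proof -
  have st: "stratum s = vec ` set V" and len: "\<forall>x\<in>set V. length x = 8"
    and nb: "map (nth V) (NB!k) = filter (\<lambda>y. y \<in> set V) (cands (V!k))"
    using assms unfolding goodV_def by auto
  have lk: "length (V!k) = 8" using len assms(2) by simp
  have "nbhd (stratum s) H_E (vec (V!k)) = vec ` {y\<in>set V. H_E (vec (V!k)) (vec y)}"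
    unfolding nbhd_def st by auto
  also have "{y\<in>set V. H_E (vec (V!k)) (vec y)} = set (filter (\<lambda>y. y \<in> set V) (cands (V!k)))"
    using H_E_vec[OF lk] len by auto
  also have "\<dots> = nth V ` set (NB!k)" unfolding nb[symmetric] by simp
  finally show ?thesis .
qed

lemma nbhd_dyn: "nbhd (dyn_V s) dyn_E b = {c\<in>{1..s}. adjL b c}"
  unfolding nbhd_def dyn_V_def dyn_E_def e8_adj_iff by simp

lemma good_to_ok: assumes "goodV s V NB" "k0 < length V" "V!k0 = eL s" "s \<in> {1..8}" "good_h s h"
  shows "okL s NB (map (h \<circ> vec) V) \<and> (map (h \<circ> vec) V)!k0 = s"
proof -
  have st: "stratum s = vec ` set V" and len: "\<forall>x\<in>set V. length x = 8" and lNB: "length NB = length V"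
    and rng: "\<forall>k<length V. \<forall>l\<in>set (NB!k). l < length V"
    using assms unfolding goodV_def by auto
  have hf: "h \<in> stratum s \<rightarrow> {1..s}" and hs: "h (simple_root s) = s"
    and om: "open_map (stratum s) H_E (dyn_V s) dyn_E h" using assms(5) unfolding good_h_def by auto
  define hs where "hs = map (h \<circ> vec) V"
  have hsk: "k < length V \<Longrightarrow> hs!k = h (vec (V!k))" for k unfolding hs_def by simp
  have inst: "k < length V \<Longrightarrow> vec (V!k) \<in> stratum s" for k unfolding st by simp
  have "okL s NB hs"
    unfolding okL_def
  proof (intro conjI allI impI)
    show "length hs = length NB" using lNB hs_def by simp
    fix k assume k: "k < length NB"
    then have k': "k < length V" using lNB by simp
    show "hs!k \<in> {1..s}" using hf inst[OF k'] hsk[OF k'] by auto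
    have nbk: "nbhd (stratum s) H_E (vec (V!k)) = vec ` nth V ` set (NB!k)" by (rule nbhd_V[OF assms(1) k'])
    have surj: "h ` nbhd (stratum s) H_E (vec (V!k)) = nbhd (dyn_V s) dyn_E (h (vec (V!k)))"
      using om inst[OF k'] unfolding open_map_def by blast
    have hom: "\<forall>u\<in>stratum s. \<forall>v\<in>stratum s. H_E u v \<longrightarrow> dyn_E (h u) (h v)"
      using om unfolding open_map_def by blast
    have img: "h ` nbhd (stratum s) H_E (vec (V!k)) = nth hs ` set (NB!k)"
      unfolding nbk using rng k' hsk by (auto simp: image_image)
    show "nth hs ` set (NB!k) = {b\<in>{1..s}. adjL (hs!k) b}"
      using surj img nbhd_dyn hsk[OF k'] by simp
    show "\<forall>l\<in>set (NB!k). adjL (hs!k) (hs!l)"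
    proof
      fix l assume l: "l \<in> set (NB!k)"
      have "vec (V!l) \<in> nbhd (stratum s) H_E (vec (V!k))" unfolding nbk using l by blast
      then have "H_E (vec (V!k)) (vec (V!l))" unfolding nbhd_def by simp
      moreover have "l < length V" using rng k' l by blast
      ultimately show "adjL (hs!k) (hs!l)" using hom inst k' hsk unfolding dyn_E_def e8_adj_iff by metis
    qed
  qed
  moreover have "hs!k0 = s" using hsk[OF assms(2)] assms(3) simple_vec[of s] assms(4) hs by simp
  ultimately show ?thesis unfolding hs_def by simp
qed

lemma ok_to_good: assumes "goodV s V NB" "k0 < length V" "V!k0 = eL s" "s \<in> {1..8}"
  "distinct V" "okL s NB sol" "sol!k0 = s"
  shows "good_h s (\<lambda>\<beta>. sol ! (SOME k. k < length V \<and> vec (V!k) = \<beta>))" (is "good_h s ?h")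
proof -
  have st: "stratum s = vec ` set V" and len: "\<forall>x\<in>set V. length x = 8" and lNB: "length NB = length V"
    and rng: "\<forall>k<length V. \<forall>l\<in>set (NB!k). l < length V"
    using assms unfolding goodV_def by auto
  have hv: "?h (vec (V!k)) = sol!k" if k: "k < length V" for k
  proof -
    have ex: "\<exists>j. j < length V \<and> vec (V!j) = vec (V!k)" using k by blast
    define j where "j = (SOME j. j < length V \<and> vec (V!j) = vec (V!k))"
    have j: "j < length V" "vec (V!j) = vec (V!k)" using someI_ex[OF ex] unfolding j_def by auto
    then have "V!j = V!k" using vec_eq len k by (metis nth_mem)
    then have "j = k" using assms(5) j(1) k by (simp add: nth_eq_iff_index_eq)
    then show ?thesis unfolding j_def by simp
  qed
  have ok: "length sol = length NB" "\<And>k. k < length NB \<Longrightarrow> sol!k \<in> {1..s} \<and>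
     (\<forall>l\<in>set (NB!k). adjL (sol!k) (sol!l)) \<and> (nth sol) ` set (NB!k) = {b\<in>{1..s}. adjL (sol!k) b}"
    using assms(6) unfolding okL_def by auto
  have img: "?h ` nbhd (stratum s) H_E (vec (V!k)) = nth sol ` set (NB!k)" if k: "k < length V" for k
    unfolding nbhd_V[OF assms(1) k] using rng k hv by (auto simp: image_image)
  show ?thesis unfolding good_h_def open_map_def
  proof (intro conjI ballI)
    show "?h \<in> stratum s \<rightarrow> {1..s}" unfolding st using hv ok lNB by (auto simp: in_set_conv_nth)
    then show "\<And>u. u \<in> stratum s \<Longrightarrow> ?h u \<in> dyn_V s" unfolding dyn_V_def by auto
    show "?h (simple_root s) = s" using simple_vec[OF assms(4)] assms(3) hv[OF assms(2)] assms(7) by simp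
  next
    fix u v assume u: "u \<in> stratum s" and v: "v \<in> stratum s"
    then obtain k where k: "k < length V" "u = vec (V!k)" unfolding st by (auto simp: in_set_conv_nth)
    show "H_E u v \<longrightarrow> dyn_E (?h u) (?h v)"
    proof
      assume "H_E u v"
      then have "v \<in> nbhd (stratum s) H_E u" using v unfolding nbhd_def by simp
      then obtain l where l: "l \<in> set (NB!k)" "v = vec (V!l)" unfolding k(2) nbhd_V[OF assms(1) k(1)] by auto
      have "l < length V" using rng k l by blast
      then show "dyn_E (?h u) (?h v)" using ok(2)[of k] k l hv lNB unfolding dyn_E_def e8_adj_iff by auto
    qed
  next
    fix u assume u: "u \<in> stratum s"
    then obtain k where k: "k < length V" "u = vec (V!k)" unfolding st by (auto simp: in_set_conv_nth)
    show "?h ` nbhd (stratum s) H_E u = nbhd (dyn_V s) dyn_E (?h u)"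
      unfolding k(2) img[OF k(1)] nbhd_dyn hv[OF k(1)] using ok(2)[of k] k lNB by simp
  qed
qed


definition eqset :: "nat list \<Rightarrow> nat list \<Rightarrow> bool" where
  "eqset A B = (list_all (\<lambda>v. v \<in> set B) A \<and> list_all (\<lambda>v. v \<in> set A) B)"

lemma eqset_iff: "eqset A B \<longleftrightarrow> set A = set B"
  unfolding eqset_def list_all_iff by auto

definition pass :: "nat \<Rightarrow> nat list list \<Rightarrow> nat list list \<Rightarrow> nat \<Rightarrow> nat \<Rightarrow> nat list \<Rightarrow> nat \<Rightarrow> bool" where
  "pass s NB CP k0 k p a = ((k = k0 \<longrightarrow> a = s) \<and> list_all (\<lambda>l. l < k \<longrightarrow> adjL a (p!l)) (NB!k) \<and>
     list_all (\<lambda>j. j \<le> k \<and> list_all (\<lambda>l. l \<le> k) (NB!j) \<longrightarrow>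
        eqset (map (nth (p@[a])) (NB!j)) (filter (adjL ((p@[a])!j)) [1..<s+1])) (CP!k))"

definition stepS :: "nat \<Rightarrow> nat list list \<Rightarrow> nat list list \<Rightarrow> nat \<Rightarrow> nat \<Rightarrow> nat list list \<Rightarrow> nat list list" where
  "stepS s NB CP k0 k L = concat (map (\<lambda>p. map (\<lambda>a. p @ [a]) (filter (pass s NB CP k0 k p) [1..<s+1])) L)"

fun srch :: "nat \<Rightarrow> nat list list \<Rightarrow> nat list list \<Rightarrow> nat \<Rightarrow> nat \<Rightarrow> nat list list" where
  "srch s NB CP k0 0 = [[]]"
| "srch s NB CP k0 (Suc k) = stepS s NB CP k0 k (srch s NB CP k0 k)"

lemma srch_num: "srch s NB CP k0 (numeral n) = stepS s NB CP k0 (pred_numeral n) (srch s NB CP k0 (pred_numeral n))"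
  by (simp only: numeral_eq_Suc srch.simps)

lemma srch_one: "srch s NB CP k0 1 = stepS s NB CP k0 0 [[]]"
  by (simp only: One_nat_def srch.simps)

lemma srch_sound: assumes "okL s NB hs" "hs!k0 = s"
  shows "k \<le> length NB \<Longrightarrow> take k hs \<in> set (srch s NB CP k0 k)"
proof (induction k)
  case 0 then show ?case by simp
next
  case (Suc k)
  have lh: "length hs = length NB" and k: "k < length NB" using assms Suc unfolding okL_def by auto
  have ok: "hs!k \<in> {1..s}" "\<forall>l\<in>set (NB!k). adjL (hs!k) (hs!l)"
    "\<And>j. j < length NB \<Longrightarrow> (nth hs) ` set (NB!j) = {b\<in>{1..s}. adjL (hs!j) b}"
    using assms(1) k unfolding okL_def by auto
  have tk: "take (Suc k) hs = take k hs @ [hs!k]" using lh k by (simp add: take_Suc_conv_app_nth)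
  have "pass s NB CP k0 k (take k hs) (hs!k)"
    unfolding pass_def
  proof (intro conjI)
    show "k = k0 \<longrightarrow> hs!k = s" using assms(2) by auto
    show "list_all (\<lambda>l. l < k \<longrightarrow> adjL (hs!k) (take k hs ! l)) (NB!k)"
      using ok(2) by (auto simp: list_all_iff)
    show "list_all (\<lambda>j. j \<le> k \<and> list_all (\<lambda>l. l \<le> k) (NB!j) \<longrightarrow>
        eqset (map (nth (take k hs @ [hs!k])) (NB!j)) (filter (adjL ((take k hs @ [hs!k])!j)) [1..<s+1])) (CP!k)"
      unfolding list_all_iff
    proof (intro ballI impI)
      fix j assume "j \<in> set (CP!k)" and j: "j \<le> k \<and> (\<forall>l\<in>set (NB!j). l \<le> k)"
      have e: "l \<le> k \<Longrightarrow> (take k hs @ [hs!k]) ! l = hs ! l" for l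
        unfolding tk[symmetric] using lh k by simp
      have "map (nth (take k hs @ [hs!k])) (NB!j) = map (nth hs) (NB!j)"
        using j e by (auto simp: list_all_iff)
      moreover have "j < length NB" using j k by simp
      ultimately show "eqset (map (nth (take k hs @ [hs!k])) (NB!j)) (filter (adjL ((take k hs @ [hs!k])!j)) [1..<s+1])"
        unfolding eqset_iff using ok(3) e j by auto
    qed
  qed
  moreover have "hs!k \<in> set [1..<s+1]" using ok(1) by auto
  moreover have IH: "take k hs \<in> set (srch s NB CP k0 k)" using Suc k by simp
  ultimately have "take k hs @ [hs!k] \<in> set (stepS s NB CP k0 k (srch s NB CP k0 k))"
    unfolding stepS_def by (auto intro!: bexI[of _ "take k hs"])
  then show ?case using tk by simp
qed

lemma srch_all: assumes "okL s NB hs" "hs!k0 = s" shows "hs \<in> set (srch s NB CP k0 (length NB))"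
  using srch_sound[OF assms, of "length NB"] assms(1) unfolding okL_def by simp


definition okC :: "nat \<Rightarrow> nat list list \<Rightarrow> nat list \<Rightarrow> bool" where
  "okC s NB hs = (length hs = length NB \<and> list_all (\<lambda>k. hs!k \<in> set [1..<s+1] \<and> list_all (\<lambda>l. adjL (hs!k) (hs!l)) (NB!k) \<and>
      eqset (map (nth hs) (NB!k)) (filter (adjL (hs!k)) [1..<s+1])) [0..<length NB])"

lemma okC_okL: "okC s NB hs \<Longrightarrow> okL s NB hs"
  unfolding okC_def okL_def eqset_iff list_all_iff by auto

lemma nb_conv: assumes "length NB = length V" "list_all (\<lambda>(x,nb). map (nth V) nb = filter P (cands x)) (zip V NB)"
  "\<And>y. P y \<longleftrightarrow> y \<in> set V"
  shows "\<forall>k<length V. map (nth V) (NB!k) = filter (\<lambda>y. y \<in> set V) (cands (V!k))"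
proof (intro allI impI)
  fix k assume k: "k < length V"
  then have "(V!k, NB!k) \<in> set (zip V NB)" using assms(1) by (metis in_set_zip fst_conv snd_conv)
  then have "map (nth V) (NB!k) = filter P (cands (V!k))" using assms(2) by (auto simp: list_all_iff)
  moreover have "P = (\<lambda>y. y \<in> set V)" using assms(3) by auto
  ultimately show "map (nth V) (NB!k) = filter (\<lambda>y. y \<in> set V) (cands (V!k))" by simp
qed

lemma memTP_iff: "memT x TP \<longleftrightarrow> x \<in> set RP"
  using memTP chk_compl by (auto simp: list_all_iff)

lemma goodV_intro: assumes "s \<in> {3..8}" "filter (\<lambda>x. stP s (mxL x)) RP = V" "length NB = length V"
  "list_all (\<lambda>(x,nb). map (nth V) nb = filter (\<lambda>y. memT y TP \<and> stP s (mxL y)) (cands x)) (zip V NB)"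
  "list_all (list_all (\<lambda>l. l < length V)) NB"
  shows "goodV s V NB"
  unfolding goodV_def
proof (intro conjI)
  show "stratum s = vec ` set V" using stratum_eq[OF assms(1)] assms(2) by simp
  show "\<forall>x\<in>set V. length x = 8" using RP_len assms(2) by auto
  show "length NB = length V" by fact
  show "\<forall>k<length V. map (nth V) (NB!k) = filter (\<lambda>y. y \<in> set V) (cands (V!k))"
  proof (rule nb_conv[OF assms(3) assms(4)])
    fix y
    have "y \<in> set V \<longleftrightarrow> y \<in> set (filter (\<lambda>x. stP s (mxL x)) RP)" unfolding assms(2) ..
    also have "\<dots> \<longleftrightarrow> memT y TP \<and> stP s (mxL y)" unfolding memTP_iff by simp
    finally show "memT y TP \<and> stP s (mxL y) \<longleftrightarrow> y \<in> set V" by simp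
  qed
  show "\<forall>k<length V. \<forall>l\<in>set (NB!k). l < length V" using assms(5) assms(3)
    by (auto simp: list_all_iff)
qed

lemma hv_lemma: assumes "goodV s V NB" "distinct V" "k < length V"
  shows "(\<lambda>\<beta>. sol ! (SOME k. k < length V \<and> vec (V!k) = \<beta>)) (vec (V!k)) = sol!k"
proof -
  have len: "\<forall>x\<in>set V. length x = 8" using assms(1) unfolding goodV_def by auto
  have ex: "\<exists>j. j < length V \<and> vec (V!j) = vec (V!k)" using assms(3) by blast
  define j where "j = (SOME j. j < length V \<and> vec (V!j) = vec (V!k))"
  have j: "j < length V" "vec (V!j) = vec (V!k)" using someI_ex[OF ex] unfolding j_def by auto
  then have "V!j = V!k" using vec_eq len assms(3) by (metis nth_mem)
  then have "j = k" using assms(2,3) j(1) by (simp add: nth_eq_iff_index_eq)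
  then show ?thesis unfolding j_def by simp
qed

lemma final_exists: assumes "goodV s V NB" "k0 < length V" "V!k0 = eL s" "s \<in> {1..8}"
  "distinct V" "okC s NB sol" "sol!k0 = s" "srch s NB CP k0 (length NB) = [sol]"
  shows "\<exists>h. good_h s h \<and> (\<forall>h'. good_h s h' \<longrightarrow> (\<forall>\<beta>\<in>stratum s. h' \<beta> = h \<beta>))"
proof (intro exI conjI allI impI ballI)
  let ?h = "\<lambda>\<beta>. sol ! (SOME k. k < length V \<and> vec (V!k) = \<beta>)"
  show "good_h s ?h" by (rule ok_to_good[OF assms(1-5) okC_okL[OF assms(6)] assms(7)])
  fix h' \<beta> assume h': "good_h s h'" and b: "\<beta> \<in> stratum s"
  have "okL s NB (map (h' \<circ> vec) V) \<and> (map (h' \<circ> vec) V)!k0 = s"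
    by (rule good_to_ok[OF assms(1-4) h'])
  then have "map (h' \<circ> vec) V \<in> set (srch s NB CP k0 (length NB))" using srch_all by blast
  then have m: "map (h' \<circ> vec) V = sol" using assms(8) by simp
  obtain k where k: "k < length V" "\<beta> = vec (V!k)" using b assms(1) unfolding goodV_def by (auto simp: in_set_conv_nth)
  have "h' \<beta> = sol!k" using m k by (metis comp_apply nth_map)
  moreover have "?h \<beta> = sol!k" using hv_lemma[OF assms(1,5) k(1), of sol] k(2) by simp
  ultimately show "h' \<beta> = ?h \<beta>" by simp
qed

lemma final_none: assumes "goodV s V NB" "k0 < length V" "V!k0 = eL s" "s \<in> {1..8}"
  "srch s NB CP k0 (length NB) = []"
  shows "\<not> (\<exists>h. good_h s h)"
proof
  assume "\<exists>h. good_h s h"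
  then obtain h where h: "good_h s h" by blast
  have "okL s NB (map (h \<circ> vec) V) \<and> (map (h \<circ> vec) V)!k0 = s"
    by (rule good_to_ok[OF assms(1-4) h])
  then have "map (h \<circ> vec) V \<in> set (srch s NB CP k0 (length NB))" using srch_all by blast
  then show False using assms(5) by simp
qed


lemma V3_filt: "filter (\<lambda>x. stP 3 (mxL x)) RP = V3" by (simp add: RP_def V3_def stP_def)
lemma NB3_len: "length NB3 = 3" by (simp add: NB3_def)
lemma V3_len: "length V3 = 3" by (simp add: V3_def)
lemma NB3_chk: "list_all (\<lambda>(x,nb). map (nth V3) nb = filter (\<lambda>y. memT y TP \<and> stP 3 (mxL y)) (cands x)) (zip V3 NB3)"
  by (simp add: V3_def NB3_def TP_def stP_def cands_def eL_def)
lemma NB3_rng: "list_all (list_all (\<lambda>l. l < 3)) NB3" by (simp add: V3_len NB3_def)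
lemma goodV3: "goodV 3 V3 NB3"
  by (rule goodV_intro[OF _ V3_filt]) (simp_all add: NB3_len V3_len NB3_chk NB3_rng)
lemma V3_k0: "V3 ! 2 = eL 3" by (simp add: V3_def eL_def)

lemma V3_dist: "distinct V3" by (simp add: V3_def)
lemma sol3_ok: "okC 3 NB3 sol3" by (simp add: okC_def NB3_def sol3_def eqset_def adjL_def upt_rec)
lemma sol3_k0: "sol3 ! 2 = 3" by (simp add: sol3_def)
lemma srch3: "srch 3 NB3 CP3 2 (length NB3) = [sol3]"
  unfolding NB3_len by (simp add: srch_num srch_one stepS_def NB3_def CP3_def pass_def eqset_def adjL_def upt_rec sol3_def)
lemma thm3: "\<exists>h. good_h 3 h \<and> (\<forall>h'. good_h 3 h' \<longrightarrow> (\<forall>\<beta>\<in>stratum 3. h' \<beta> = h \<beta>))"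
  by (rule final_exists[OF goodV3 _ V3_k0 _ V3_dist sol3_ok sol3_k0 srch3]) (simp_all add: V3_len)

lemma V4_filt: "filter (\<lambda>x. stP 4 (mxL x)) RP = V4" by (simp add: RP_def V4_def stP_def)
lemma NB4_len: "length NB4 = 6" by (simp add: NB4_def)
lemma V4_len: "length V4 = 6" by (simp add: V4_def)
lemma NB4_chk: "list_all (\<lambda>(x,nb). map (nth V4) nb = filter (\<lambda>y. memT y TP \<and> stP 4 (mxL y)) (cands x)) (zip V4 NB4)"
  by (simp add: V4_def NB4_def TP_def stP_def cands_def eL_def)
lemma NB4_rng: "list_all (list_all (\<lambda>l. l < 6)) NB4" by (simp add: V4_len NB4_def)
lemma goodV4: "goodV 4 V4 NB4"
  by (rule goodV_intro[OF _ V4_filt]) (simp_all add: NB4_len V4_len NB4_chk NB4_rng)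
lemma V4_k0: "V4 ! 5 = eL 4" by (simp add: V4_def eL_def)

lemma V4_dist: "distinct V4" by (simp add: V4_def)
lemma sol4_ok: "okC 4 NB4 sol4" by (simp add: okC_def NB4_def sol4_def eqset_def adjL_def upt_rec)
lemma sol4_k0: "sol4 ! 5 = 4" by (simp add: sol4_def)
lemma srch4: "srch 4 NB4 CP4 5 (length NB4) = [sol4]"
  unfolding NB4_len by (simp add: srch_num srch_one stepS_def NB4_def CP4_def pass_def eqset_def adjL_def upt_rec sol4_def)
lemma thm4: "\<exists>h. good_h 4 h \<and> (\<forall>h'. good_h 4 h' \<longrightarrow> (\<forall>\<beta>\<in>stratum 4. h' \<beta> = h \<beta>))"
  by (rule final_exists[OF goodV4 _ V4_k0 _ V4_dist sol4_ok sol4_k0 srch4]) (simp_all add: V4_len)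

lemma V5_filt: "filter (\<lambda>x. stP 5 (mxL x)) RP = V5" by (simp add: RP_def V5_def stP_def)
lemma NB5_len: "length NB5 = 10" by (simp add: NB5_def)
lemma V5_len: "length V5 = 10" by (simp add: V5_def)
lemma NB5_chk: "list_all (\<lambda>(x,nb). map (nth V5) nb = filter (\<lambda>y. memT y TP \<and> stP 5 (mxL y)) (cands x)) (zip V5 NB5)"
  by (simp add: V5_def NB5_def TP_def stP_def cands_def eL_def)
lemma NB5_rng: "list_all (list_all (\<lambda>l. l < 10)) NB5" by (simp add: V5_len NB5_def)
lemma goodV5: "goodV 5 V5 NB5"
  by (rule goodV_intro[OF _ V5_filt]) (simp_all add: NB5_len V5_len NB5_chk NB5_rng)
lemma V5_k0: "V5 ! 9 = eL 5" by (simp add: V5_def eL_def)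

lemma V5_dist: "distinct V5" by (simp add: V5_def)
lemma sol5_ok: "okC 5 NB5 sol5" by (simp add: okC_def NB5_def sol5_def eqset_def adjL_def upt_rec)
lemma sol5_k0: "sol5 ! 9 = 5" by (simp add: sol5_def)
lemma srch5: "srch 5 NB5 CP5 9 (length NB5) = [sol5]"
  unfolding NB5_len by (simp add: srch_num srch_one stepS_def NB5_def CP5_def pass_def eqset_def adjL_def upt_rec sol5_def)
lemma thm5: "\<exists>h. good_h 5 h \<and> (\<forall>h'. good_h 5 h' \<longrightarrow> (\<forall>\<beta>\<in>stratum 5. h' \<beta> = h \<beta>))"
  by (rule final_exists[OF goodV5 _ V5_k0 _ V5_dist sol5_ok sol5_k0 srch5]) (simp_all add: V5_len)

lemma V6_filt: "filter (\<lambda>x. stP 6 (mxL x)) RP = V6" by (simp add: RP_def V6_def stP_def)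
lemma NB6_len: "length NB6 = 16" by (simp add: NB6_def)
lemma V6_len: "length V6 = 16" by (simp add: V6_def)
lemma NB6_chk: "list_all (\<lambda>(x,nb). map (nth V6) nb = filter (\<lambda>y. memT y TP \<and> stP 6 (mxL y)) (cands x)) (zip V6 NB6)"
  by (simp add: V6_def NB6_def TP_def stP_def cands_def eL_def)
lemma NB6_rng: "list_all (list_all (\<lambda>l. l < 16)) NB6" by (simp add: V6_len NB6_def)
lemma goodV6: "goodV 6 V6 NB6"
  by (rule goodV_intro[OF _ V6_filt]) (simp_all add: NB6_len V6_len NB6_chk NB6_rng)
lemma V6_k0: "V6 ! 15 = eL 6" by (simp add: V6_def eL_def)

lemma V6_dist: "distinct V6" by (simp add: V6_def)
lemma sol6_ok: "okC 6 NB6 sol6" by (simp add: okC_def NB6_def sol6_def eqset_def adjL_def upt_rec)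
lemma sol6_k0: "sol6 ! 15 = 6" by (simp add: sol6_def)
lemma srch6: "srch 6 NB6 CP6 15 (length NB6) = [sol6]"
  unfolding NB6_len by (simp add: srch_num srch_one stepS_def NB6_def CP6_def pass_def eqset_def adjL_def upt_rec sol6_def)
lemma thm6: "\<exists>h. good_h 6 h \<and> (\<forall>h'. good_h 6 h' \<longrightarrow> (\<forall>\<beta>\<in>stratum 6. h' \<beta> = h \<beta>))"
  by (rule final_exists[OF goodV6 _ V6_k0 _ V6_dist sol6_ok sol6_k0 srch6]) (simp_all add: V6_len)

lemma V7_filt: "filter (\<lambda>x. stP 7 (mxL x)) RP = V7" by (simp add: RP_def V7_def stP_def)
lemma NB7_len: "length NB7 = 27" by (simp add: NB7_def)
lemma V7_len: "length V7 = 27" by (simp add: V7_def)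
lemma NB7_chk: "list_all (\<lambda>(x,nb). map (nth V7) nb = filter (\<lambda>y. memT y TP \<and> stP 7 (mxL y)) (cands x)) (zip V7 NB7)"
  by (simp add: V7_def NB7_def TP_def stP_def cands_def eL_def)
lemma NB7_rng: "list_all (list_all (\<lambda>l. l < 27)) NB7" by (simp add: V7_len NB7_def)
lemma goodV7: "goodV 7 V7 NB7"
  by (rule goodV_intro[OF _ V7_filt]) (simp_all add: NB7_len V7_len NB7_chk NB7_rng)
lemma V7_k0: "V7 ! 26 = eL 7" by (simp add: V7_def eL_def)

lemma V7_dist: "distinct V7" by (simp add: V7_def)
lemma sol7_ok: "okC 7 NB7 sol7" by (simp add: okC_def NB7_def sol7_def eqset_def adjL_def upt_rec)
lemma sol7_k0: "sol7 ! 26 = 7" by (simp add: sol7_def)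
lemma srch7: "srch 7 NB7 CP7 26 (length NB7) = [sol7]"
  unfolding NB7_len by (simp add: srch_num srch_one stepS_def NB7_def CP7_def pass_def eqset_def adjL_def upt_rec sol7_def)
lemma thm7: "\<exists>h. good_h 7 h \<and> (\<forall>h'. good_h 7 h' \<longrightarrow> (\<forall>\<beta>\<in>stratum 7. h' \<beta> = h \<beta>))"
  by (rule final_exists[OF goodV7 _ V7_k0 _ V7_dist sol7_ok sol7_k0 srch7]) (simp_all add: V7_len)

lemma V8_filt: "filter (\<lambda>x. stP 8 (mxL x)) RP = V8" by (simp add: RP_def V8_def stP_def)
lemma NB8_len: "length NB8 = 57" by (simp add: NB8_def)
lemma V8_len: "length V8 = 57" by (simp add: V8_def)
lemma NB8_chk: "list_all (\<lambda>(x,nb). map (nth V8) nb = filter (\<lambda>y. memT y TP \<and> stP 8 (mxL y)) (cands x)) (zip V8 NB8)"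
  by (simp add: V8_def NB8_def TP_def stP_def cands_def eL_def)
lemma NB8_rng: "list_all (list_all (\<lambda>l. l < 57)) NB8" by (simp add: V8_len NB8_def)
lemma goodV8: "goodV 8 V8 NB8"
  by (rule goodV_intro[OF _ V8_filt]) (simp_all add: NB8_len V8_len NB8_chk NB8_rng)
lemma V8_k0: "V8 ! 56 = eL 8" by (simp add: V8_def eL_def)

lemma srch8: "srch 8 NB8 CP8 56 (length NB8) = []"
  unfolding NB8_len by (simp add: srch_num srch_one stepS_def NB8_def CP8_def pass_def eqset_def adjL_def upt_rec)
lemma thm8: "\<not> (\<exists>h. good_h 8 h)"
  by (rule final_none[OF goodV8 _ V8_k0 _ srch8]) (simp_all add: V8_len)

theorem mainTheorem12:
  shows "(\<forall>s\<in>{3..7}. \<exists>h. good_h s h \<and>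
            (\<forall>h'. good_h s h' \<longrightarrow> (\<forall>\<beta>\<in>stratum s. h' \<beta> = h \<beta>)))
         \<and> \<not> (\<exists>h. good_h 8 h)"
proof -
  have "s \<in> {3..7} \<Longrightarrow> s = 3 \<or> s = 4 \<or> s = 5 \<or> s = 6 \<or> s = 7" for s :: nat by auto
  then show ?thesis using thm3 thm4 thm5 thm6 thm7 thm8 by blast
qed

end
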